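(* In the smart-metering model described in the context, for every policy $\mathbf q\in\mathcal Q_A$ there exists $\mathbf q'\in\mathcal Q_B$ with $L_T(\mathbf q')\le L_T(\mathbf q)$; thus there is no loss of optimality in restricting attention to $\mathcal Q_B$. Moreover, for every $\mathbf q\in\mathcal Q_B$, $$L_T(\mathbf q)=\frac1T\sum_{t=1}^T I^{\mathbf q}(X_t,S_t;Y_t\mid Y^{t-1}),$$ where $I^{\mathbf q}(X_t,S_t;Y_t\mid Y^{t-1})=\sum_{x_t,s_t,y^t}P^{\mathbf q}(X_t=x_t,S_t=s_t,Y^t=y^t)\log\frac{q_t(y_t\mid x_t,s_t,y^{t-1})}{P^{\mathbf q}(Y_t=y_t\mid Y^{t-1}=y^{t-1})}$.
   Context: Let $\mathcal X=\{0,\dots,m_x\}$, $\mathcal Y=\{0,\dots,m_y\}$, $\mathcal S=\{0,\dots,m_s\}$ with $m_x\le m_y$. The demand $\{X_t\}$ is a time-homogeneous first-order Markov chain on $\mathcal X$ with irreducible aperiodic transition matrix $Q$ and initial pmf $P_{X_1}$; $S_1\sim P_{S_1}$ independent of $\{X_t\}$. For an integer $w$ let $\mathcal Y_\circ(w)=\{y\in\mathcal Y:w+y\in\mathcal S\}$. A charging policy is a sequence of conditional pmfs $q_t(y\mid x^t,s^t,y^{t-1})$ on $\mathcal Y$ with $q_t(\mathcal Y_\circ(s_t-x_t)\mid x^t,s^t,y^{t-1})=1$; $\mathcal Q_A$ is the set of all such policies, and $\mathcal Q_B\subset\mathcal Q_A$ is the subset of policies for which $q_t(y\mid x^t,s^t,y^{t-1})$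 depends only on $(x_t,s_t,y^{t-1})$, written $q_t(y\mid x_t,s_t,y^{t-1})$. The joint law is $P^{\mathbf q}(s^T,x^T,y^T)=P_{S_1}(s_1)P_{X_1}(x_1)q_1(y_1|x_1,s_1)\prod_{t=2}^T\mathbf 1\{s_t=s_{t-1}-x_{t-1}+y_{t-1}\}Q(x_t|x_{t-1})q_t(y_t|x^t,s^t,y^{t-1})$. $L_T(\mathbf q)=\frac1TI^{\mathbf q}(X^T,S_1;Y^T)$. *)

theory Defs
  imports Complex_Main
begin

text \<open>Sequences of length n with entries in {0..m}; list position i is time i+1.\<close>
definition seqs :: "nat \<Rightarrow> nat \<Rightarrow> nat list set" where
  "seqs n m = {xs. length xs = n \<and> set xs \<subseteq> {0..m}}"

text \<open>A (general, history-dependent) policy: q t xs ss ys y = q_t(y | x^t, s^t, y^(t-1)),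
  where length xs = length ss = t and length ys = t - 1.\<close>
type_synonym policy = "nat \<Rightarrow> nat list \<Rightarrow> nat list \<Rightarrow> nat list \<Rightarrow> nat \<Rightarrow> real"

text \<open>A Q_B-type kernel r t x s ys y = q_t(y | x_t, s_t, y^(t-1)), and its embedding as a policy.\<close>
type_synonym policyB = "nat \<Rightarrow> nat \<Rightarrow> nat \<Rightarrow> nat list \<Rightarrow> nat \<Rightarrow> real"

definition embedB :: "policyB \<Rightarrow> policy" where
  "embedB r = (\<lambda>t xs ss ys y. r t (last xs) (last ss) ys y)"

definition policyA :: "nat \<Rightarrow> nat \<Rightarrow> nat \<Rightarrow> nat \<Rightarrow> policy \<Rightarrow> bool" where
  "policyA mx my ms T q \<longleftrightarrow>
    (\<forall>t\<in>{1..T}. \<forall>xs\<in>seqs t mx. \<forall>ss\<in>seqs t ms. \<forall>ys\<in>seqs (t - 1) my.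
       (\<forall>y\<in>{0..my}. 0 \<le> q t xs ss ys y) \<and>
       (\<Sum>y\<in>{0..my}. q t xs ss ys y) = 1 \<and>
       (\<Sum>y\<in>{y\<in>{0..my}. int (last ss) - int (last xs) + int y \<in> {0..int ms}}.
           q t xs ss ys y) = 1)"

text \<open>Joint law P^q(s^T, x^T, y^T); Q x x' = Q(x' | x).\<close>
definition joint :: "nat \<Rightarrow> (nat \<Rightarrow> nat \<Rightarrow> real) \<Rightarrow> (nat \<Rightarrow> real) \<Rightarrow> (nat \<Rightarrow> real)
    \<Rightarrow> policy \<Rightarrow> nat list \<Rightarrow> nat list \<Rightarrow> nat list \<Rightarrow> real" where
  "joint T Q PX1 PS1 q ss xs ys =
     PS1 (ss ! 0) * PX1 (xs ! 0) *
     (\<Prod>t\<in>{1..T}. q t (take t xs) (take t ss) (take (t - 1) ys) (ys ! (t - 1))) *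
     (\<Prod>t\<in>{2..T}. (if int (ss ! (t - 1)) = int (ss ! (t - 2)) - int (xs ! (t - 2)) + int (ys ! (t - 2))
                     then 1 else 0) * Q (xs ! (t - 2)) (xs ! (t - 1)))"

definition prob_ev :: "nat \<Rightarrow> nat \<Rightarrow> nat \<Rightarrow> nat \<Rightarrow> (nat \<Rightarrow> nat \<Rightarrow> real) \<Rightarrow> (nat \<Rightarrow> real)
    \<Rightarrow> (nat \<Rightarrow> real) \<Rightarrow> policy \<Rightarrow> (nat list \<Rightarrow> nat list \<Rightarrow> nat list \<Rightarrow> bool) \<Rightarrow> real" where
  "prob_ev mx my ms T Q PX1 PS1 q F =
     (\<Sum>ss\<in>seqs T ms. \<Sum>xs\<in>seqs T mx. \<Sum>ys\<in>seqs T my.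
        if F ss xs ys then joint T Q PX1 PS1 q ss xs ys else 0)"

definition plogp :: "real \<Rightarrow> real \<Rightarrow> real" where
  "plogp p r = (if p = 0 then 0 else p * ln (p / r))"

text \<open>L_T(q) = (1/T) I^q(X^T, S_1; Y^T).\<close>
definition leakage :: "nat \<Rightarrow> nat \<Rightarrow> nat \<Rightarrow> nat \<Rightarrow> (nat \<Rightarrow> nat \<Rightarrow> real) \<Rightarrow> (nat \<Rightarrow> real)
    \<Rightarrow> (nat \<Rightarrow> real) \<Rightarrow> policy \<Rightarrow> real" where
  "leakage mx my ms T Q PX1 PS1 q =
     (let P = prob_ev mx my ms T Q PX1 PS1 q in
      (\<Sum>xs\<in>seqs T mx. \<Sum>s1\<in>{0..ms}. \<Sum>ys\<in>seqs T my.
         plogp (P (\<lambda>ss' xs' ys'. xs' = xs \<and> ss' ! 0 = s1 \<and> ys' = ys))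
               (P (\<lambda>ss' xs' ys'. xs' = xs \<and> ss' ! 0 = s1) * P (\<lambda>ss' xs' ys'. ys' = ys))) / real T)"

definition cond_mi :: "nat \<Rightarrow> nat \<Rightarrow> nat \<Rightarrow> nat \<Rightarrow> (nat \<Rightarrow> nat \<Rightarrow> real) \<Rightarrow> (nat \<Rightarrow> real)
    \<Rightarrow> (nat \<Rightarrow> real) \<Rightarrow> policyB \<Rightarrow> nat \<Rightarrow> real" where
  "cond_mi mx my ms T Q PX1 PS1 r t =
     (let P = prob_ev mx my ms T Q PX1 PS1 (embedB r) in
      (\<Sum>x\<in>{0..mx}. \<Sum>s\<in>{0..ms}. \<Sum>yt\<in>seqs t my.
         (let pj = P (\<lambda>ss' xs' ys'. xs' ! (t - 1) = x \<and> ss' ! (t - 1) = s \<and> take t ys' = yt);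
              pc = P (\<lambda>ss' xs' ys'. take t ys' = yt) / P (\<lambda>ss' xs' ys'. take (t - 1) ys' = butlast yt)
          in if pj = 0 then 0 else pj * ln (r t x s (butlast yt) (last yt) / pc))))"

fun mpow :: "(nat \<Rightarrow> nat \<Rightarrow> real) \<Rightarrow> nat \<Rightarrow> nat \<Rightarrow> nat \<Rightarrow> nat \<Rightarrow> real" where
  "mpow Q m 0 i j = (if i = j then 1 else 0)"
| "mpow Q m (Suc n) i j = (\<Sum>k\<in>{0..m}. mpow Q m n i k * Q k j)"

definition stochastic :: "(nat \<Rightarrow> nat \<Rightarrow> real) \<Rightarrow> nat \<Rightarrow> bool" where
  "stochastic Q m \<longleftrightarrow> (\<forall>i\<in>{0..m}. (\<forall>j\<in>{0..m}. 0 \<le> Q i j) \<and> (\<Sum>j\<in>{0..m}. Q i j) = 1)"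

definition irreducible_mc :: "(nat \<Rightarrow> nat \<Rightarrow> real) \<Rightarrow> nat \<Rightarrow> bool" where
  "irreducible_mc Q m \<longleftrightarrow> (\<forall>i\<in>{0..m}. \<forall>j\<in>{0..m}. \<exists>n>0. mpow Q m n i j > 0)"

definition aperiodic_mc :: "(nat \<Rightarrow> nat \<Rightarrow> real) \<Rightarrow> nat \<Rightarrow> bool" where
  "aperiodic_mc Q m \<longleftrightarrow> (\<forall>i\<in>{0..m}. Gcd {n. n > 0 \<and> mpow Q m n i i > 0} = 1)"

definition is_pmf_on :: "(nat \<Rightarrow> real) \<Rightarrow> nat \<Rightarrow> bool" where
  "is_pmf_on p m \<longleftrightarrow> (\<forall>i\<in>{0..m}. 0 \<le> p i) \<and> (\<Sum>i\<in>{0..m}. p i) = 1"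

end

theory Submission imports Defs begin

lemma finite_seqs[simp]: "finite (seqs n m)"
proof -
  have "seqs n m = {xs. set xs \<subseteq> {0..m} \<and> length xs = n}" by (auto simp: seqs_def)
  then show ?thesis using finite_lists_length_eq[of "{0..m}" n] by simp
qed

lemma seqs_0[simp]: "seqs 0 m = {[]}" by (auto simp: seqs_def)

lemma seqs_Suc: "seqs (Suc n) m = (\<lambda>(l,a). l @ [a]) ` (seqs n m \<times> {0..m})"
proof (rule set_eqI, rule iffI)
  fix l assume l: "l \<in> seqs (Suc n) m"
  then have "l \<noteq> []" by (auto simp: seqs_def)
  then have "l = butlast l @ [last l]" by simp
  moreover have "butlast l \<in> seqs n m" using l
    by (auto simp: seqs_def dest: in_set_butlastD)
  moreover have "last l \<in> set l" using \<open>l \<noteq> []\<close> by simp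
  then have "last l \<in> {0..m}" using l by (auto simp: seqs_def)
  ultimately show "l \<in> (\<lambda>(l,a). l @ [a]) ` (seqs n m \<times> {0..m})" by force
qed (auto simp: seqs_def)

lemma Nil_seqs[simp]: "[] \<in> seqs k m \<longleftrightarrow> k = 0" by (auto simp: seqs_def)
lemma seqs_len: "l \<in> seqs n m \<Longrightarrow> length l = n" by (simp add: seqs_def)
lemma seqs_nth: "l \<in> seqs n m \<Longrightarrow> i < n \<Longrightarrow> l ! i \<le> m"
proof -
  assume a: "l \<in> seqs n m" "i < n"
  then have "l ! i \<in> set l" by (simp add: seqs_def)
  moreover have "set l \<subseteq> {0..m}" using a by (simp add: seqs_def)
  ultimately have "l ! i \<in> {0..m}" by blast
  then show ?thesis by simp
qed
lemma seqs_last: "l \<in> seqs n m \<Longrightarrow> 0 < n \<Longrightarrow> last l \<le> m"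
proof -
  assume a: "l \<in> seqs n m" "0 < n"
  then have "last l \<in> set l" by (auto simp: seqs_def)
  moreover have "set l \<subseteq> {0..m}" using a by (simp add: seqs_def)
  ultimately have "last l \<in> {0..m}" by blast
  then show ?thesis by simp
qed
lemma seqs_take: "l \<in> seqs n m \<Longrightarrow> k \<le> n \<Longrightarrow> take k l \<in> seqs k m"
  by (auto simp: seqs_def dest: in_set_takeD)
lemma seqs_snoc[simp]: "l @ [a] \<in> seqs (Suc n) m \<longleftrightarrow> l \<in> seqs n m \<and> a \<le> m" by (auto simp: seqs_def)

lemma joint_Suc:
  assumes "k \<ge> 1" "length ss = k" "length xs = k" "length ys = k"
  shows "joint (Suc k) Q PX1 PS1 q (ss@[s]) (xs@[x]) (ys@[y]) =
    joint k Q PX1 PS1 q ss xs ys * q (Suc k) (xs@[x]) (ss@[s]) ys y *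
    ((if int s = int (last ss) - int (last xs) + int (last ys) then 1 else 0) * Q (last xs) x)"
proof -
  have p1: "(\<Prod>t\<in>{1..Suc k}. q t (take t (xs@[x])) (take t (ss@[s])) (take (t-1) (ys@[y])) ((ys@[y])!(t-1)))
    = (\<Prod>t\<in>{1..k}. q t (take t xs) (take t ss) (take (t-1) ys) (ys!(t-1))) * q (Suc k) (xs@[x]) (ss@[s]) ys y"
    using assms by (auto simp: prod.cl_ivl_Suc nth_append intro!: prod.cong)
  have p2: "(\<Prod>t\<in>{2..Suc k}. (if int ((ss@[s]) ! (t - 1)) = int ((ss@[s]) ! (t - 2)) - int ((xs@[x]) ! (t - 2)) + int ((ys@[y]) ! (t - 2))
                     then 1 else 0) * Q ((xs@[x]) ! (t - 2)) ((xs@[x]) ! (t - 1)))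
     = (\<Prod>t\<in>{2..k}. (if int (ss ! (t - 1)) = int (ss ! (t - 2)) - int (xs ! (t - 2)) + int (ys ! (t - 2))
                     then 1 else 0) * Q (xs ! (t - 2)) (xs ! (t - 1))) * 
       ((if int s = int (last ss) - int (last xs) + int (last ys) then 1 else 0) * Q (last xs) x)"
  proof -
    have ne: "ss \<noteq> []" "xs \<noteq> []" "ys \<noteq> []" using assms by auto
    have c: "\<not> Suc k < 2" using assms by simp
    show ?thesis unfolding prod.cl_ivl_Suc if_not_P[OF c]
    proof (rule arg_cong2[where f="(*)"])
      show "(\<Prod>t\<in>{2..k}. (if int ((ss@[s]) ! (t - 1)) = int ((ss@[s]) ! (t - 2)) - int ((xs@[x]) ! (t - 2)) + int ((ys@[y]) ! (t - 2))
                     then 1 else 0) * Q ((xs@[x]) ! (t - 2)) ((xs@[x]) ! (t - 1))) = 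
            (\<Prod>t\<in>{2..k}. (if int (ss ! (t - 1)) = int (ss ! (t - 2)) - int (xs ! (t - 2)) + int (ys ! (t - 2))
                     then 1 else 0) * Q (xs ! (t - 2)) (xs ! (t - 1)))"
        using assms by (intro prod.cong) (auto simp: nth_append)
      have e: "(ss@[s]) ! (Suc k - 1) = s" "(xs@[x]) ! (Suc k - 1) = x"
        "(ss@[s]) ! (Suc k - 2) = last ss" "(xs@[x]) ! (Suc k - 2) = last xs" "(ys@[y]) ! (Suc k - 2) = last ys"
        using assms ne by (auto simp: nth_append last_conv_nth)
      show "(if int ((ss@[s]) ! (Suc k - 1)) = int ((ss@[s]) ! (Suc k - 2)) - int ((xs@[x]) ! (Suc k - 2)) + int ((ys@[y]) ! (Suc k - 2))
                     then 1 else 0) * Q ((xs@[x]) ! (Suc k - 2)) ((xs@[x]) ! (Suc k - 1)) =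
            (if int s = int (last ss) - int (last xs) + int (last ys) then 1 else 0) * Q (last xs) x"
        unfolding e ..
    qed
  qed
  have h0: "(ss@[s])!0 = ss!0" "(xs@[x])!0 = xs!0" using assms by (auto simp: nth_append)
  show ?thesis unfolding joint_def p1 p2 h0 by (simp add: ac_simps)
qed

lemma joint_one: "joint (Suc 0) Q PX1 PS1 q [s] [x] [y] = PS1 s * PX1 x * q 1 [x] [s] [] y"
  by (simp add: joint_def)

definition ext3 :: "(nat list \<times> nat list \<times> nat list) \<Rightarrow> (nat \<times> nat \<times> nat) \<Rightarrow> (nat list \<times> nat list \<times> nat list)" where
  "ext3 w e = (case w of (ss,xs,ys) \<Rightarrow> case e of (s,x,y) \<Rightarrow> (ss@[s], xs@[x], ys@[y]))"

lemma ext3_simp[simp]: "ext3 (ss,xs,ys) (s,x,y) = (ss@[s], xs@[x], ys@[y])" by (simp add: ext3_def)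

locale setting =
  fixes mx my ms T :: nat and Q :: "nat \<Rightarrow> nat \<Rightarrow> real" and PX1 PS1 :: "nat \<Rightarrow> real"
  assumes mxy: "mx \<le> my" and T1: "1 \<le> T" and stoch: "stochastic Q mx"
    and px: "is_pmf_on PX1 mx" and ps: "is_pmf_on PS1 ms"
begin

definition Om :: "nat \<Rightarrow> (nat list \<times> nat list \<times> nat list) set" where
  "Om k = seqs k ms \<times> seqs k mx \<times> seqs k my"
definition E :: "(nat \<times> nat \<times> nat) set" where "E = {0..ms} \<times> {0..mx} \<times> {0..my}"

definition SS :: "policy \<Rightarrow> nat \<Rightarrow> (nat list \<Rightarrow> nat list \<Rightarrow> nat list \<Rightarrow> real) \<Rightarrow> real" where
  "SS q k f = (\<Sum>(ss,xs,ys)\<in>Om k. f ss xs ys * joint k Q PX1 PS1 q ss xs ys)"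

abbreviation pA where "pA q \<equiv> policyA mx my ms T q"
abbreviation P where "P q F \<equiv> prob_ev mx my ms T Q PX1 PS1 q F"

lemma finite_Om[simp]: "finite (Om k)" by (simp add: Om_def)
lemma finite_E[simp]: "finite E" by (simp add: E_def)

lemma Om_mem: "(ss,xs,ys) \<in> Om k \<longleftrightarrow> ss \<in> seqs k ms \<and> xs \<in> seqs k mx \<and> ys \<in> seqs k my"
  by (simp add: Om_def)

lemma Om_Suc: "Om (Suc k) = (\<lambda>(w,e). ext3 w e) ` (Om k \<times> E)"
proof -
  have "Om (Suc k) = (\<lambda>((ss,s),(xs,x),(ys,y)). (ss@[s], xs@[x], ys@[y])) `
        ((seqs k ms \<times> {0..ms}) \<times> (seqs k mx \<times> {0..mx}) \<times> (seqs k my \<times> {0..my}))"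
    unfolding Om_def seqs_Suc by (auto simp: image_iff)
  also have "\<dots> = (\<lambda>(w,e). ext3 w e) ` (Om k \<times> E)"
    unfolding Om_def E_def by (auto simp: image_iff)
  finally show ?thesis .
qed

lemma sum_Om_Suc: "(\<Sum>w\<in>Om (Suc k). F w) = (\<Sum>w\<in>Om k. \<Sum>e\<in>E. F (ext3 w e))"
proof -
  have inj: "inj_on (\<lambda>(w,e). ext3 w e) (Om k \<times> E)"
    by (auto simp: inj_on_def ext3_def split: prod.splits)
  show ?thesis unfolding Om_Suc sum.reindex[OF inj]
    by (simp add: sum.cartesian_product case_prod_unfold)
qed

lemma Om_0: "Om 0 = {([],[],[])}" by (simp add: Om_def)

lemma sum_E: "(\<Sum>e\<in>E. f e) = (\<Sum>s\<in>{0..ms}. \<Sum>x\<in>{0..mx}. \<Sum>y\<in>{0..my}. f (s,x,y))"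
  unfolding E_def by (simp add: sum.cartesian_product)

lemma sum_Om: "(\<Sum>w\<in>Om k. f w) = (\<Sum>ss\<in>seqs k ms. \<Sum>xs\<in>seqs k mx. \<Sum>ys\<in>seqs k my. f (ss,xs,ys))"
  unfolding Om_def by (simp add: sum.cartesian_product)

lemma prob_ev_SS: "P q F = SS q T (\<lambda>ss xs ys. if F ss xs ys then 1 else 0)"
  unfolding prob_ev_def SS_def sum_Om by (auto intro!: sum.cong)

lemma SS_cong: "(\<And>ss xs ys. (ss,xs,ys) \<in> Om k \<Longrightarrow> f ss xs ys = g ss xs ys) \<Longrightarrow> SS q k f = SS q k g"
  unfolding SS_def by (auto intro!: sum.cong)

lemma SS_cmult: "SS q k (\<lambda>ss xs ys. c * f ss xs ys) = c * SS q k f"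
  unfolding SS_def by (simp add: sum_distrib_left case_prod_beta ac_simps)

lemma Q_nonneg: "i \<le> mx \<Longrightarrow> j \<le> mx \<Longrightarrow> 0 \<le> Q i j" using stoch by (auto simp: stochastic_def)
lemma Q_sum: "i \<le> mx \<Longrightarrow> (\<Sum>j\<in>{0..mx}. Q i j) = 1" using stoch by (auto simp: stochastic_def)
lemma PX_nonneg: "i \<le> mx \<Longrightarrow> 0 \<le> PX1 i" using px by (auto simp: is_pmf_on_def)
lemma PS_nonneg: "i \<le> ms \<Longrightarrow> 0 \<le> PS1 i" using ps by (auto simp: is_pmf_on_def)
lemma PX_sum: "(\<Sum>i\<in>{0..mx}. PX1 i) = 1" using px by (auto simp: is_pmf_on_def)
lemma PS_sum: "(\<Sum>i\<in>{0..ms}. PS1 i) = 1" using ps by (auto simp: is_pmf_on_def)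

lemma pA_at:
  assumes pq: "pA q" and t: "t \<in> {1..T}" and h: "xs \<in> seqs t mx" "ss \<in> seqs t ms" "ys \<in> seqs (t-1) my"
  shows "(\<forall>y\<in>{0..my}. 0 \<le> q t xs ss ys y) \<and>
       (\<Sum>y\<in>{0..my}. q t xs ss ys y) = 1 \<and>
       (\<Sum>y\<in>{y\<in>{0..my}. int (last ss) - int (last xs) + int y \<in> {0..int ms}}.
           q t xs ss ys y) = 1"
  using bspec[OF bspec[OF bspec[OF bspec[OF pq[unfolded policyA_def] t] h(1)] h(2)] h(3)] .

context
  fixes q :: policy and t :: nat and xs ss ys :: "nat list"
  assumes pq: "pA q" and t: "1 \<le> t" "t \<le> T" and h: "xs \<in> seqs t mx" "ss \<in> seqs t ms" "ys \<in> seqs (t-1) my"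
begin
lemma tt: "t \<in> {1..T}" using t by simp
lemma pA_nonneg: "y \<le> my \<Longrightarrow> 0 \<le> q t xs ss ys y"
  using pA_at[OF pq tt h, THEN conjunct1] by simp
lemma pA_sum: "(\<Sum>y\<in>{0..my}. q t xs ss ys y) = 1"
  using pA_at[OF pq tt h, THEN conjunct2, THEN conjunct1] .
lemma pA_infeas:
  assumes y: "y \<le> my" and nf: "\<not> (int (last ss) - int (last xs) + int y \<in> {0..int ms})"
  shows "q t xs ss ys y = 0"
proof -
  let ?F = "{y\<in>{0..my}. int (last ss) - int (last xs) + int y \<in> {0..int ms}}"
  have s1: "(\<Sum>y\<in>?F. q t xs ss ys y) = 1" using pA_at[OF pq tt h, THEN conjunct2, THEN conjunct2] .
  have sub: "?F \<subseteq> {0..my}" by blast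
  have "(\<Sum>y\<in>{0..my}. q t xs ss ys y) = (\<Sum>y\<in>{0..my} - ?F. q t xs ss ys y) + (\<Sum>y\<in>?F. q t xs ss ys y)"
    by (rule sum.subset_diff[OF sub]) simp
  then have z0: "(\<Sum>y\<in>{0..my} - ?F. q t xs ss ys y) = 0" using s1 pA_sum by linarith
  have nn: "\<And>z. z \<in> {0..my} - ?F \<Longrightarrow> 0 \<le> q t xs ss ys z" by (rule pA_nonneg) (drule DiffD1, simp)
  have fin: "finite ({0..my} - ?F)" by (rule finite_Diff) simp
  have all: "\<forall>z\<in>{0..my} - ?F. q t xs ss ys z = 0"
    using iffD1[OF sum_nonneg_eq_0_iff[OF fin nn] z0] .
  have ym: "y \<in> {0..my} - ?F" using y nf by simp
  show ?thesis using bspec[OF all ym] .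
qed
end

lemma joint_nonneg:
  assumes pq: "pA q" and k: "1 \<le> k" "k \<le> T" and w: "(ss,xs,ys) \<in> Om k"
  shows "0 \<le> joint k Q PX1 PS1 q ss xs ys"
proof -
  have l: "length ss = k" "length xs = k" "length ys = k" using w by (auto simp: Om_def seqs_len)
  have a: "0 \<le> PS1 (ss!0)" "0 \<le> PX1 (xs!0)" using w k by (auto intro!: PS_nonneg PX_nonneg seqs_nth simp: Om_def)
  have b: "0 \<le> (\<Prod>t\<in>{1..k}. q t (take t xs) (take t ss) (take (t - 1) ys) (ys ! (t - 1)))"
    using w k by (auto intro!: prod_nonneg pA_nonneg[OF pq] seqs_take seqs_nth simp: Om_def)
  have c: "0 \<le> (\<Prod>t\<in>{2..k}. (if int (ss ! (t - 1)) = int (ss ! (t - 2)) - int (xs ! (t - 2)) + int (ys ! (t - 2))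
                     then 1 else 0) * Q (xs ! (t - 2)) (xs ! (t - 1)))"
    using w k by (auto intro!: prod_nonneg mult_nonneg_nonneg Q_nonneg seqs_nth simp: Om_def)
  show ?thesis unfolding joint_def using a b c by simp
qed

lemma joint_feas:
  assumes pq: "pA q" and k: "1 \<le> k" "k \<le> T" and w: "(ss,xs,ys) \<in> Om k"
    and nz: "joint k Q PX1 PS1 q ss xs ys \<noteq> 0"
  shows "int (last ss) - int (last xs) + int (last ys) \<in> {0..int ms}"
proof (rule ccontr)
  assume nf: "\<not> ?thesis"
  have l: "length ss = k" "length xs = k" "length ys = k" using w by (auto simp: Om_def seqs_len)
  have "q k (take k xs) (take k ss) (take (k - 1) ys) (ys ! (k - 1)) \<noteq> 0"
    using nz k unfolding joint_def by auto
  moreover have "ys ! (k - 1) = last ys" using l k by (subst last_conv_nth) auto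
  moreover have "last ys \<le> my" using w k by (intro seqs_last) (auto simp: Om_def)
  moreover have "q k xs ss (take (k-1) ys) (last ys) = 0"
    using w k nf l \<open>last ys \<le> my\<close> by (intro pA_infeas[OF pq]) (auto simp: Om_def seqs_take seqs_last)
  ultimately show False using l by simp
qed


lemma SS_Suc_gen:
  assumes pq: "pA q" and k: "1 \<le> k" "k < T"
    and FG: "\<And>ss xs ys s x y. (ss,xs,ys) \<in> Om k \<Longrightarrow> s \<le> ms \<Longrightarrow> x \<le> mx \<Longrightarrow> y \<le> my \<Longrightarrow>
               F (ss@[s]) (xs@[x]) (ys@[y]) = G ss xs ys * H x"
  shows "SS q (Suc k) F = SS q k (\<lambda>ss xs ys. G ss xs ys * (\<Sum>x\<in>{0..mx}. Q (last xs) x * H x))"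
proof -
  have inner: "(\<Sum>e\<in>E. (case ext3 (ss,xs,ys) e of (a,b,c) \<Rightarrow> F a b c * joint (Suc k) Q PX1 PS1 q a b c))
     = G ss xs ys * (\<Sum>x\<in>{0..mx}. Q (last xs) x * H x) * joint k Q PX1 PS1 q ss xs ys"
    if w: "(ss,xs,ys) \<in> Om k" for ss xs ys
  proof -
    have l: "length ss = k" "length xs = k" "length ys = k" using w by (auto simp: Om_def seqs_len)
    define J0 where "J0 = joint k Q PX1 PS1 q ss xs ys"
    define v where "v = int (last ss) - int (last xs) + int (last ys)"
    define ind where "ind = (\<lambda>s::nat. if int s = v then 1 else (0::real))"
    have "(\<Sum>e\<in>E. (case ext3 (ss,xs,ys) e of (a,b,c) \<Rightarrow> F a b c * joint (Suc k) Q PX1 PS1 q a b c))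
        = (\<Sum>s\<in>{0..ms}. \<Sum>x\<in>{0..mx}. \<Sum>y\<in>{0..my}.
             G ss xs ys * H x * (J0 * q (Suc k) (xs@[x]) (ss@[s]) ys y * (ind s * Q (last xs) x)))"
      unfolding sum_E using w l k
      by (intro sum.cong refl) (simp add: FG joint_Suc J0_def ind_def v_def)
    also have "\<dots> = (\<Sum>s\<in>{0..ms}. \<Sum>x\<in>{0..mx}. G ss xs ys * H x * J0 * ind s * Q (last xs) x)"
    proof (intro sum.cong refl)
      fix s x assume sx: "s \<in> {0..ms}" "x \<in> {0..mx}"
      have "(\<Sum>y\<in>{0..my}. q (Suc k) (xs@[x]) (ss@[s]) ys y) = 1"
        using w sx k by (intro pA_sum[OF pq]) (auto simp: Om_def)
      then show "(\<Sum>y\<in>{0..my}. G ss xs ys * H x * (J0 * q (Suc k) (xs@[x]) (ss@[s]) ys y * (ind s * Q (last xs) x)))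
          = G ss xs ys * H x * J0 * ind s * Q (last xs) x"
        by (simp add: sum_distrib_left[symmetric] sum_distrib_right[symmetric] ac_simps
                 flip: sum_distrib_left)
    qed
    also have "\<dots> = (\<Sum>s\<in>{0..ms}. \<Sum>x\<in>{0..mx}. G ss xs ys * J0 * (ind s * (Q (last xs) x * H x)))"
      by (intro sum.cong refl) (simp add: ac_simps)
    also have "\<dots> = G ss xs ys * J0 * ((\<Sum>s\<in>{0..ms}. ind s) * (\<Sum>x\<in>{0..mx}. Q (last xs) x * H x))"
      by (subst sum_product) (simp only: sum_distrib_left)
    also have "J0 * (\<Sum>s\<in>{0..ms}. ind s) = J0"
    proof (cases "J0 = 0")
      case False
      then have "v \<in> {0..int ms}" using joint_feas[OF pq k(1) _ w] k unfolding J0_def v_def by simp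
      then have "(\<Sum>s\<in>{0..ms}. ind s) = (\<Sum>s\<in>{0..ms}. if s = nat v then 1 else 0)"
        unfolding ind_def by (intro sum.cong refl) auto
      also have "\<dots> = 1" using \<open>v \<in> {0..int ms}\<close> by (simp add: nat_le_iff)
      finally show ?thesis by simp
    qed simp
    then have "G ss xs ys * J0 * ((\<Sum>s\<in>{0..ms}. ind s) * (\<Sum>x\<in>{0..mx}. Q (last xs) x * H x))
        = G ss xs ys * (\<Sum>x\<in>{0..mx}. Q (last xs) x * H x) * J0"
      by (metis mult.assoc mult.commute)
    finally show ?thesis unfolding J0_def .
  qed
  show ?thesis unfolding SS_def sum_Om_Suc
    by (intro sum.cong refl) (auto simp: inner)
qed

lemma SS_marg:
  assumes pq: "pA q" and k: "1 \<le> k" "k \<le> j" "j \<le> T"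
  shows "SS q j (\<lambda>ss xs ys. f (take k ss) (take k xs) (take k ys)) = SS q k f"
  using k(2,3)
proof (induction j rule: dec_induct)
  case base
  show ?case by (rule SS_cong) (auto simp: Om_def seqs_len)
next
  case (step j)
  have "SS q (Suc j) (\<lambda>ss xs ys. f (take k ss) (take k xs) (take k ys))
     = SS q j (\<lambda>ss xs ys. f (take k ss) (take k xs) (take k ys) * (\<Sum>x\<in>{0..mx}. Q (last xs) x * 1))"
    using step k by (intro SS_Suc_gen[OF pq]) (auto simp: Om_def seqs_len)
  also have "\<dots> = SS q j (\<lambda>ss xs ys. f (take k ss) (take k xs) (take k ys))"
    using step k by (intro SS_cong) (auto simp: Om_def Q_sum seqs_last)
  finally show ?case using step by simp
qed

lemma SS_one: assumes pq: "pA q" shows "SS q 1 (\<lambda>_ _ _. 1) = 1"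
proof -
  have "SS q 1 (\<lambda>_ _ _. 1) = (\<Sum>s\<in>{0..ms}. \<Sum>x\<in>{0..mx}. \<Sum>y\<in>{0..my}. PS1 s * PX1 x * q 1 [x] [s] [] y)"
    unfolding SS_def One_nat_def sum_Om_Suc Om_0 by (simp add: sum_E joint_one)
  also have "\<dots> = (\<Sum>s\<in>{0..ms}. \<Sum>x\<in>{0..mx}. PS1 s * PX1 x)"
  proof (intro sum.cong refl)
    fix s x assume sx: "s \<in> {0..ms}" "x \<in> {0..mx}"
    have "(\<Sum>y\<in>{0..my}. q 1 [x] [s] [] y) = 1"
      using sx T1 by (intro pA_sum[OF pq]) (auto simp: seqs_def)
    then show "(\<Sum>y\<in>{0..my}. PS1 s * PX1 x * q 1 [x] [s] [] y) = PS1 s * PX1 x"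
      by (simp flip: sum_distrib_left)
  qed
  also have "\<dots> = 1" by (simp flip: sum_distrib_left sum_distrib_right add: PX_sum PS_sum)
  finally show ?thesis .
qed

lemma SS_mass: assumes pq: "pA q" and k: "1 \<le> k" "k \<le> T" shows "SS q k (\<lambda>_ _ _. 1) = 1"
  using SS_marg[OF pq order_refl k, of "\<lambda>_ _ _. 1"] SS_one[OF pq] by simp


lemma group_sum:
  fixes f :: "'a \<Rightarrow> real" and g :: "'b \<Rightarrow> real"
  assumes "finite A" "finite V" "\<And>a. a \<in> A \<Longrightarrow> \<phi> a \<in> V"
  shows "(\<Sum>a\<in>A. f a * g (\<phi> a)) = (\<Sum>v\<in>V. (\<Sum>a\<in>A. if \<phi> a = v then f a else 0) * g v)"
proof -
  have "(\<Sum>v\<in>V. (\<Sum>a\<in>A. if \<phi> a = v then f a else 0) * g v)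
      = (\<Sum>v\<in>V. \<Sum>a\<in>A. if \<phi> a = v then f a * g v else 0)"
  proof (intro sum.cong refl)
    fix v assume "v \<in> V" show "(\<Sum>a\<in>A. if \<phi> a = v then f a else 0) * g v = (\<Sum>a\<in>A. if \<phi> a = v then f a * g v else 0)"
      by (subst sum_distrib_right) (rule sum.cong, simp_all)
  qed
  also have "\<dots> = (\<Sum>a\<in>A. \<Sum>v\<in>V. if \<phi> a = v then f a * g v else 0)" by (rule sum.swap)
  also have "\<dots> = (\<Sum>a\<in>A. f a * g (\<phi> a))"
    using assms by (intro sum.cong refl) (simp add: sum.delta)
  finally show ?thesis ..
qed

lemma SS_group:
  assumes V: "finite V" and phi: "\<And>ss xs ys. (ss,xs,ys) \<in> Om k \<Longrightarrow> \<phi> ss xs ys \<in> V"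
  shows "SS q k (\<lambda>ss xs ys. F ss xs ys * g (\<phi> ss xs ys))
       = (\<Sum>v\<in>V. SS q k (\<lambda>ss xs ys. F ss xs ys * (if \<phi> ss xs ys = v then 1 else 0)) * g v)"
proof -
  have "SS q k (\<lambda>ss xs ys. F ss xs ys * g (\<phi> ss xs ys))
      = (\<Sum>w\<in>Om k. (case w of (ss,xs,ys) \<Rightarrow> F ss xs ys * joint k Q PX1 PS1 q ss xs ys) * g (case w of (ss,xs,ys) \<Rightarrow> \<phi> ss xs ys))"
    unfolding SS_def by (intro sum.cong refl) (auto simp: ac_simps)
  also have "\<dots> = (\<Sum>v\<in>V. (\<Sum>w\<in>Om k. if (case w of (ss,xs,ys) \<Rightarrow> \<phi> ss xs ys) = v then (case w of (ss,xs,ys) \<Rightarrow> F ss xs ys * joint k Q PX1 PS1 q ss xs ys) else 0) * g v)"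
    using phi V by (intro group_sum) auto
  also have "\<dots> = (\<Sum>v\<in>V. SS q k (\<lambda>ss xs ys. F ss xs ys * (if \<phi> ss xs ys = v then 1 else 0)) * g v)"
    unfolding SS_def by (intro sum.cong refl arg_cong2[where f="(*)"]) auto
  finally show ?thesis .
qed

lemma SS_nonneg:
  assumes pq: "pA q" and k: "1 \<le> k" "k \<le> T" and f: "\<And>ss xs ys. (ss,xs,ys) \<in> Om k \<Longrightarrow> 0 \<le> f ss xs ys"
  shows "0 \<le> SS q k f"
  unfolding SS_def using f joint_nonneg[OF pq k] by (intro sum_nonneg) auto

lemma SS_ge:
  assumes pq: "pA q" and k: "1 \<le> k" "k \<le> T" and f: "\<And>ss xs ys. (ss,xs,ys) \<in> Om k \<Longrightarrow> 0 \<le> f ss xs ys"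
    and w: "(ss,xs,ys) \<in> Om k"
  shows "f ss xs ys * joint k Q PX1 PS1 q ss xs ys \<le> SS q k f"
proof -
  have "(\<lambda>(ss,xs,ys). f ss xs ys * joint k Q PX1 PS1 q ss xs ys) (ss,xs,ys) \<le> SS q k f"
    unfolding SS_def using f joint_nonneg[OF pq k] w by (intro member_le_sum) auto
  then show ?thesis by simp
qed

lemma P_nonneg: "pA q \<Longrightarrow> 0 \<le> P q F"
  unfolding prob_ev_SS using T1 by (intro SS_nonneg) auto

lemma P_ge: "pA q \<Longrightarrow> (ss,xs,ys) \<in> Om T \<Longrightarrow> F ss xs ys \<Longrightarrow> joint T Q PX1 PS1 q ss xs ys \<le> P q F"
  unfolding prob_ev_SS using T1 SS_ge[of q T "\<lambda>ss xs ys. if F ss xs ys then 1 else 0" ss xs ys] by auto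

lemma last_take_nth: "0 < n \<Longrightarrow> n \<le> length l \<Longrightarrow> last (take n l) = l ! (n - 1)"
  by (subst last_conv_nth) (auto simp: min_def)

definition mmT :: "policy \<Rightarrow> nat \<Rightarrow> nat \<Rightarrow> nat \<Rightarrow> nat list \<Rightarrow> real" where
  "mmT q t x s c = P q (\<lambda>ss xs ys. xs ! (t - 1) = x \<and> ss ! (t - 1) = s \<and> take t ys = c)"

lemma mmT_SS:
  assumes pq: "pA q" and t: "1 \<le> t" "t \<le> T" and c: "length c = t"
  shows "mmT q t x s c = SS q t (\<lambda>ss xs ys. if last xs = x \<and> last ss = s \<and> ys = c then 1 else 0)"
proof -
  have "mmT q t x s c = SS q T (\<lambda>ss xs ys. (\<lambda>ss xs ys. if last xs = x \<and> last ss = s \<and> ys = c then 1 else 0) (take t ss) (take t xs) (take t ys))"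
    unfolding mmT_def prob_ev_SS using t
    by (intro SS_cong) (auto simp: Om_def seqs_len last_take_nth)
  also have "\<dots> = SS q t (\<lambda>ss xs ys. if last xs = x \<and> last ss = s \<and> ys = c then 1 else 0)"
    using t by (intro SS_marg[OF pq]) auto
  finally show ?thesis .
qed

lemma mmT_nonneg: "pA q \<Longrightarrow> 0 \<le> mmT q t x s c"
  unfolding mmT_def by (rule P_nonneg)

lemma mmT_one:
  assumes pq: "pA q" and b: "x \<le> mx" "s \<le> ms" "y \<le> my"
  shows "mmT q 1 x s [y] = PS1 s * PX1 x * q 1 [x] [s] [] y"
proof -
  define Z where "Z = PS1 s * PX1 x * q 1 [x] [s] [] y"
  have "mmT q 1 x s [y] = SS q 1 (\<lambda>ss xs ys. if last xs = x \<and> last ss = s \<and> ys = [y] then 1 else 0)"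
    by (rule mmT_SS[OF pq order_refl T1]) simp
  also have "\<dots> = (\<Sum>s'\<in>{0..ms}. \<Sum>x'\<in>{0..mx}. \<Sum>y'\<in>{0..my}.
      (if x' = x \<and> s' = s \<and> y' = y then 1 else 0) * (PS1 s' * PX1 x' * q (Suc 0) [x'] [s'] [] y'))"
    unfolding SS_def One_nat_def sum_Om_Suc Om_0
    by (simp add: sum_E joint_one)
  also have "\<dots> = (\<Sum>s'\<in>{0..ms}. \<Sum>x'\<in>{0..mx}. \<Sum>y'\<in>{0..my}.
      if y' = y then (if x' = x then (if s' = s then Z else 0) else 0) else 0)"
    by (intro sum.cong refl) (auto simp: Z_def)
  also have "\<dots> = Z" using b by (simp add: sum.delta)
  finally show ?thesis unfolding Z_def .
qed

lemma mmT_Suc: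
  assumes pq: "pA q" and k: "1 \<le> k" "k < T" and b: "x' \<le> mx" "s' \<le> ms" "y \<le> my" and c: "c \<in> seqs k my"
  shows "mmT q (Suc k) x' s' (c@[y]) = (\<Sum>w\<in>Om k. case w of (ss,xs,ys) \<Rightarrow>
     (if ys = c then 1 else 0) * joint k Q PX1 PS1 q ss xs ys * q (Suc k) (xs@[x']) (ss@[s']) c y *
     ((if int s' = int (last ss) - int (last xs) + int (last c) then 1 else 0) * Q (last xs) x'))"
proof -
  have lc: "length (c@[y]) = Suc k" using c by (simp add: seqs_len)
  have k1: "1 \<le> Suc k" and k2: "Suc k \<le> T" using k by auto
  have inner: "(\<Sum>e\<in>E. case ext3 (ss,xs,ys) e of (ss, xs, ys) \<Rightarrow>
            (if last xs = x' \<and> last ss = s' \<and> ys = c @ [y] then 1 else 0) * joint (Suc k) Q PX1 PS1 q ss xs ys)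
       = (if ys = c then 1 else 0) * joint k Q PX1 PS1 q ss xs ys * q (Suc k) (xs@[x']) (ss@[s']) c y *
     ((if int s' = int (last ss) - int (last xs) + int (last c) then 1 else 0) * Q (last xs) x')"
    if w: "(ss,xs,ys) \<in> Om k" for ss xs ys
  proof -
    have l: "length ss = k" "length xs = k" "length ys = k" using w by (auto simp: Om_def seqs_len)
    define Z where "Z = (if ys = c then 1 else 0) * joint (Suc k) Q PX1 PS1 q (ss@[s']) (xs@[x']) (ys@[y])"
    have "(\<Sum>e\<in>E. case ext3 (ss,xs,ys) e of (ss, xs, ys) \<Rightarrow>
            (if last xs = x' \<and> last ss = s' \<and> ys = c @ [y] then 1 else 0) * joint (Suc k) Q PX1 PS1 q ss xs ys)
       = (\<Sum>s\<in>{0..ms}. \<Sum>x\<in>{0..mx}. \<Sum>y'\<in>{0..my}. if y' = y then (if x = x' then (if s = s' then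
          Z else 0) else 0) else 0)"
      unfolding sum_E Z_def by (intro sum.cong refl) auto
    also have "\<dots> = Z"
      using b by (simp add: sum.delta)
    also have "Z = (if ys = c then 1 else 0) * joint (Suc k) Q PX1 PS1 q (ss@[s']) (xs@[x']) (ys@[y])" by (simp add: Z_def)
    also have "\<dots> = (if ys = c then 1 else 0) * joint k Q PX1 PS1 q ss xs ys * q (Suc k) (xs@[x']) (ss@[s']) c y *
     ((if int s' = int (last ss) - int (last xs) + int (last c) then 1 else 0) * Q (last xs) x')"
      using l k by (cases "ys = c") (simp_all add: joint_Suc)
    finally show "(\<Sum>e\<in>E. case ext3 (ss,xs,ys) e of (ss, xs, ys) \<Rightarrow>
            (if last xs = x' \<and> last ss = s' \<and> ys = c @ [y] then 1 else 0) * joint (Suc k) Q PX1 PS1 q ss xs ys)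
       = (if ys = c then 1 else 0) * joint k Q PX1 PS1 q ss xs ys * q (Suc k) (xs@[x']) (ss@[s']) c y *
     ((if int s' = int (last ss) - int (last xs) + int (last c) then 1 else 0) * Q (last xs) x')" .
  qed
  show ?thesis
    unfolding mmT_SS[OF pq k1 k2 lc] SS_def sum_Om_Suc
    by (intro sum.cong refl) (auto simp: inner)
qed


definition Nf :: "policy \<Rightarrow> nat \<Rightarrow> nat \<Rightarrow> nat \<Rightarrow> nat list \<Rightarrow> real" where
  "Nf q t x' s' c = (if t = 1 then PS1 s' * PX1 x' else
     (\<Sum>x\<in>{0..mx}. \<Sum>s\<in>{0..ms}. mmT q (t-1) x s c *
        ((if int s' = int s - int x + int (last c) then 1 else 0) * Q x x')))"

lemma NGROUP:
  assumes pq: "pA q" and k: "1 \<le> k" "k < T" and c: "c \<in> seqs k my"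
  shows "(\<Sum>w\<in>Om k. case w of (ss,xs,ys) \<Rightarrow> (if ys = c then 1 else 0) * joint k Q PX1 PS1 q ss xs ys *
     ((if int s' = int (last ss) - int (last xs) + int (last c) then 1 else 0) * Q (last xs) x'))
     = Nf q (Suc k) x' s' c"
proof -
  define G where "G = (\<lambda>(x::nat,s::nat). (if int s' = int s - int x + int (last c) then 1 else 0) * Q x x')"
  have "(\<Sum>w\<in>Om k. case w of (ss,xs,ys) \<Rightarrow> (if ys = c then 1 else 0) * joint k Q PX1 PS1 q ss xs ys *
     ((if int s' = int (last ss) - int (last xs) + int (last c) then 1 else 0) * Q (last xs) x'))
     = SS q k (\<lambda>ss xs ys. (if ys = c then 1 else 0) * G (last xs, last ss))"
    unfolding SS_def G_def by (intro sum.cong refl) auto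
  also have "\<dots> = (\<Sum>v\<in>{0..mx} \<times> {0..ms}. SS q k (\<lambda>ss xs ys. (if ys = c then 1 else 0) *
        (if (last xs, last ss) = v then 1 else 0)) * G v)"
    using k by (intro SS_group) (auto simp: Om_def seqs_last)
  also have "\<dots> = (\<Sum>x\<in>{0..mx}. \<Sum>s\<in>{0..ms}. SS q k (\<lambda>ss xs ys. (if ys = c then 1 else 0) *
        (if (last xs, last ss) = (x,s) then 1 else 0)) * G (x,s))"
    unfolding sum.cartesian_product by (intro sum.cong refl) (auto split: prod.splits)
  also have "\<dots> = (\<Sum>x\<in>{0..mx}. \<Sum>s\<in>{0..ms}. mmT q k x s c * G (x,s))"
  proof (intro sum.cong refl arg_cong2[where f="(*)"])
    fix x s
    have lc: "length c = k" using c by (simp add: seqs_len)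
    show "SS q k (\<lambda>ss xs ys. (if ys = c then 1 else 0) * (if (last xs, last ss) = (x,s) then 1 else 0)) = mmT q k x s c"
      using k by (subst mmT_SS[OF pq k(1) _ lc]) (auto intro!: SS_cong)
  qed
  also have "\<dots> = Nf q (Suc k) x' s' c" using k unfolding Nf_def G_def by simp
  finally show ?thesis .
qed

lemma N1:
  assumes pq: "pA q" and t: "1 \<le> t" "t \<le> T" and b: "x' \<le> mx" "s' \<le> ms" and c: "c \<in> seqs (t-1) my"
  shows "(\<Sum>y\<in>{0..my}. mmT q t x' s' (c@[y])) = Nf q t x' s' c"
proof (cases "t = 1")
  case True
  then have c0: "c = []" using c by simp
  have "(\<Sum>y\<in>{0..my}. mmT q t x' s' (c@[y])) = (\<Sum>y\<in>{0..my}. PS1 s' * PX1 x' * q 1 [x'] [s'] [] y)"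
    unfolding True c0 using b by (intro sum.cong refl) (auto simp: mmT_one[OF pq] mmT_one[OF pq, unfolded One_nat_def])
  also have "\<dots> = PS1 s' * PX1 x'"
  proof -
    have "(\<Sum>y\<in>{0..my}. q 1 [x'] [s'] [] y) = 1" using b T1 by (intro pA_sum[OF pq]) (auto simp: seqs_def)
    then show ?thesis by (simp flip: sum_distrib_left)
  qed
  finally show ?thesis using True by (simp add: Nf_def)
next
  case False
  then obtain k where tk: "t = Suc k" and k: "1 \<le> k" "k < T" using t by (cases t) auto
  have ck: "c \<in> seqs k my" using c tk by simp
  have "(\<Sum>y\<in>{0..my}. mmT q t x' s' (c@[y])) = (\<Sum>y\<in>{0..my}. \<Sum>w\<in>Om k. case w of (ss,xs,ys) \<Rightarrow>
     (if ys = c then 1 else 0) * joint k Q PX1 PS1 q ss xs ys * q (Suc k) (xs@[x']) (ss@[s']) c y *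
     ((if int s' = int (last ss) - int (last xs) + int (last c) then 1 else 0) * Q (last xs) x'))"
    unfolding tk using b k ck by (intro sum.cong refl mmT_Suc[OF pq]) auto
  also have "\<dots> = (\<Sum>w\<in>Om k. \<Sum>y\<in>{0..my}. case w of (ss,xs,ys) \<Rightarrow>
     (if ys = c then 1 else 0) * joint k Q PX1 PS1 q ss xs ys * q (Suc k) (xs@[x']) (ss@[s']) c y *
     ((if int s' = int (last ss) - int (last xs) + int (last c) then 1 else 0) * Q (last xs) x'))"
    by (rule sum.swap)
  also have "\<dots> = (\<Sum>w\<in>Om k. case w of (ss,xs,ys) \<Rightarrow> (if ys = c then 1 else 0) * joint k Q PX1 PS1 q ss xs ys *
     ((if int s' = int (last ss) - int (last xs) + int (last c) then 1 else 0) * Q (last xs) x'))"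
  proof (intro sum.cong refl)
    fix w assume w: "w \<in> Om k"
    obtain ss xs ys where wd: "w = (ss,xs,ys)" by (cases w) auto
    have "(\<Sum>y\<in>{0..my}. q (Suc k) (xs@[x']) (ss@[s']) c y) = 1"
      using w wd b k ck by (intro pA_sum[OF pq]) (auto simp: Om_def)
    then show "(\<Sum>y\<in>{0..my}. case w of (ss,xs,ys) \<Rightarrow>
     (if ys = c then 1 else 0) * joint k Q PX1 PS1 q ss xs ys * q (Suc k) (xs@[x']) (ss@[s']) c y *
     ((if int s' = int (last ss) - int (last xs) + int (last c) then 1 else 0) * Q (last xs) x')) =
     (case w of (ss,xs,ys) \<Rightarrow> (if ys = c then 1 else 0) * joint k Q PX1 PS1 q ss xs ys *
     ((if int s' = int (last ss) - int (last xs) + int (last c) then 1 else 0) * Q (last xs) x'))"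
      unfolding wd by (simp add: sum_distrib_left[symmetric] sum_distrib_right[symmetric] ac_simps
                 flip: sum_distrib_left)
  qed
  also have "\<dots> = Nf q t x' s' c" unfolding tk using NGROUP[OF pq k ck] .
  finally show ?thesis .
qed

lemma N2:
  assumes pq: "pA (embedB r)" and t: "1 \<le> t" "t \<le> T" and b: "x' \<le> mx" "s' \<le> ms" "y \<le> my"
    and c: "c \<in> seqs (t-1) my"
  shows "mmT (embedB r) t x' s' (c@[y]) = r t x' s' c y * Nf (embedB r) t x' s' c"
proof (cases "t = 1")
  case True
  then have c0: "c = []" using c by simp
  have "mmT (embedB r) 1 x' s' [y] = PS1 s' * PX1 x' * embedB r 1 [x'] [s'] [] y" by (rule mmT_one[OF pq b])
  then show ?thesis unfolding True c0 by (simp add: Nf_def embedB_def)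
next
  case False
  then obtain k where tk: "t = Suc k" and k: "1 \<le> k" "k < T" using t by (cases t) auto
  have ck: "c \<in> seqs k my" using c tk by simp
  have "mmT (embedB r) t x' s' (c@[y]) = (\<Sum>w\<in>Om k. case w of (ss,xs,ys) \<Rightarrow>
     (if ys = c then 1 else 0) * joint k Q PX1 PS1 (embedB r) ss xs ys * embedB r (Suc k) (xs@[x']) (ss@[s']) c y *
     ((if int s' = int (last ss) - int (last xs) + int (last c) then 1 else 0) * Q (last xs) x'))"
    unfolding tk using b k ck by (intro mmT_Suc[OF pq]) auto
  also have "\<dots> = r t x' s' c y * (\<Sum>w\<in>Om k. case w of (ss,xs,ys) \<Rightarrow>
     (if ys = c then 1 else 0) * joint k Q PX1 PS1 (embedB r) ss xs ys *
     ((if int s' = int (last ss) - int (last xs) + int (last c) then 1 else 0) * Q (last xs) x'))"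
    unfolding sum_distrib_left tk by (intro sum.cong refl) (auto simp: embedB_def ac_simps)
  also have "\<dots> = r t x' s' c y * Nf (embedB r) t x' s' c" unfolding tk using NGROUP[OF pq k ck] by simp
  finally show ?thesis .
qed


lemma mmT_infeas:
  assumes pq: "pA q" and t: "1 \<le> t" "t \<le> T" and b: "x \<le> mx" "s \<le> ms" "y \<le> my"
    and c: "c \<in> seqs (t-1) my" and nf: "\<not> (int s - int x + int y \<in> {0..int ms})"
  shows "mmT q t x s (c@[y]) = 0"
proof -
  have lc: "length (c@[y]) = t" using c t by (simp add: seqs_len)
  have "SS q t (\<lambda>ss xs ys. if last xs = x \<and> last ss = s \<and> ys = c@[y] then 1 else 0) = 0"
    unfolding SS_def
  proof (intro sum.neutral ballI)
    fix w assume w: "w \<in> Om t"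
    obtain ss xs ys where wd: "w = (ss,xs,ys)" by (cases w) auto
    show "(case w of (ss,xs,ys) \<Rightarrow> (if last xs = x \<and> last ss = s \<and> ys = c@[y] then 1 else 0) * joint t Q PX1 PS1 q ss xs ys) = 0"
    proof (cases "last xs = x \<and> last ss = s \<and> ys = c@[y]")
      case True
      have "joint t Q PX1 PS1 q ss xs ys = 0"
      proof (rule ccontr)
        assume "joint t Q PX1 PS1 q ss xs ys \<noteq> 0"
        from joint_feas[OF pq t _ this] w wd have "int (last ss) - int (last xs) + int (last ys) \<in> {0..int ms}" by simp
        then show False using True nf by simp
      qed
      then show ?thesis using wd by simp
    qed (use wd in auto)
  qed
  then show ?thesis using mmT_SS[OF pq t lc] by simp
qed

definition rdef :: "policy \<Rightarrow> policyB" where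
  "rdef q t x s c y = (if (\<Sum>y'\<in>{0..my}. mmT q t x s (c@[y'])) = 0 then (if y = x then 1 else 0)
      else mmT q t x s (c@[y]) / (\<Sum>y'\<in>{0..my}. mmT q t x s (c@[y'])))"

lemma rdef_props:
  assumes pq: "pA q" and t: "t \<in> {1..T}" and h: "xs \<in> seqs t mx" "ss \<in> seqs t ms" "ys \<in> seqs (t-1) my"
  shows "(\<forall>y\<in>{0..my}. 0 \<le> embedB (rdef q) t xs ss ys y) \<and>
       (\<Sum>y\<in>{0..my}. embedB (rdef q) t xs ss ys y) = 1 \<and>
       (\<Sum>y\<in>{y\<in>{0..my}. int (last ss) - int (last xs) + int y \<in> {0..int ms}}.
           embedB (rdef q) t xs ss ys y) = 1"
proof -
  define x where "x = last xs"
  define s where "s = last ss"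
  have t1: "1 \<le> t" "t \<le> T" using t by auto
  have xb: "x \<le> mx" and sb: "s \<le> ms" using h t1 unfolding x_def s_def by (auto intro: seqs_last)
  define D where "D = (\<Sum>y'\<in>{0..my}. mmT q t x s (ys@[y']))"
  have Dnn: "0 \<le> D" unfolding D_def by (intro sum_nonneg mmT_nonneg[OF pq])
  have emb: "\<And>y. embedB (rdef q) t xs ss ys y = (if D = 0 then (if y = x then 1 else 0) else mmT q t x s (ys@[y]) / D)"
    unfolding embedB_def rdef_def D_def x_def s_def by simp
  let ?F = "{y\<in>{0..my}. int (last ss) - int (last xs) + int y \<in> {0..int ms}}"
  have p1: "\<forall>y\<in>{0..my}. 0 \<le> embedB (rdef q) t xs ss ys y"
    unfolding emb using Dnn mmT_nonneg[OF pq] by simp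
  have p2: "(\<Sum>y\<in>{0..my}. embedB (rdef q) t xs ss ys y) = 1"
  proof (cases "D = 0")
    case True
    then show ?thesis unfolding emb using xb mxy by simp
  next
    case False
    then show ?thesis unfolding emb D_def by (simp flip: sum_divide_distrib)
  qed
  have xF: "x \<in> ?F" using xb mxy sb unfolding x_def s_def by auto
  have p3: "(\<Sum>y\<in>?F. embedB (rdef q) t xs ss ys y) = 1"
  proof (cases "D = 0")
    case True
    have "(\<Sum>y\<in>?F. embedB (rdef q) t xs ss ys y) = (\<Sum>y\<in>?F. if y = x then 1 else 0)"
      unfolding emb using True by simp
    also have "\<dots> = 1" using xF by (subst sum.delta) auto
    finally show ?thesis .
  next
    case False
    have sub: "?F \<subseteq> {0..my}" by blast
    have "(\<Sum>y\<in>?F. mmT q t x s (ys@[y])) = D"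
      unfolding D_def
    proof (rule sum.mono_neutral_left)
      show "\<forall>i\<in>{0..my} - ?F. mmT q t x s (ys @ [i]) = 0"
      proof
        fix i assume i: "i \<in> {0..my} - ?F"
        have im: "i \<in> {0..my}" using i by (rule DiffD1)
        then have "i \<le> my" by simp
        have ni: "i \<notin> ?F" using i unfolding Diff_iff by (rule conjunct2)
        have "\<not> (int (last ss) - int (last xs) + int i \<in> {0..int ms})"
          using im ni unfolding mem_Collect_eq by blast
        then have nf: "\<not> (int s - int x + int i \<in> {0..int ms})" unfolding x_def s_def .
        show "mmT q t x s (ys @ [i]) = 0" using t1 xb sb h nf \<open>i \<le> my\<close> by (intro mmT_infeas[OF pq]) auto
      qed
    qed (use sub in auto)
    then have "(\<Sum>y\<in>?F. embedB (rdef q) t xs ss ys y) = D / D"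
      unfolding emb using False by (simp flip: sum_divide_distrib)
    then show ?thesis using False by simp
  qed
  show ?thesis using p1 p2 p3 by blast
qed

lemma rdef_policy: "pA q \<Longrightarrow> pA (embedB (rdef q))"
  unfolding policyA_def[of mx my ms T "embedB (rdef q)"]
  by (intro ballI) (rule rdef_props)

lemma marg_eq:
  assumes pq: "pA q"
  shows "1 \<le> t \<Longrightarrow> t \<le> T \<Longrightarrow> x \<le> mx \<Longrightarrow> s \<le> ms \<Longrightarrow> c \<in> seqs t my \<Longrightarrow>
    mmT (embedB (rdef q)) t x s c = mmT q t x s c"
proof (induction t arbitrary: x s c)
  case 0 then show ?case by simp
next
  case (Suc t)
  have q'A: "pA (embedB (rdef q))" by (rule rdef_policy[OF pq])
  obtain c0 y where cd: "c = c0@[y]" and c0: "c0 \<in> seqs t my" and y: "y \<le> my"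
    using Suc.prems(5) unfolding seqs_Suc by auto
  have c0': "c0 \<in> seqs (Suc t - 1) my" using c0 by simp
  have Neq: "Nf (embedB (rdef q)) (Suc t) x s c0 = Nf q (Suc t) x s c0"
  proof (cases "t = 0")
    case True then show ?thesis by (simp add: Nf_def)
  next
    case False
    then show ?thesis unfolding Nf_def using Suc.IH[of _ _ c0] Suc.prems c0
      by (intro if_cong refl sum.cong arg_cong2[where f="(*)"]) auto
  qed
  define D where "D = (\<Sum>y'\<in>{0..my}. mmT q (Suc t) x s (c0@[y']))"
  have DN: "D = Nf q (Suc t) x s c0" unfolding D_def using Suc.prems c0' by (intro N1[OF pq]) auto
  have "mmT (embedB (rdef q)) (Suc t) x s c = rdef q (Suc t) x s c0 y * Nf (embedB (rdef q)) (Suc t) x s c0"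
    unfolding cd using Suc.prems c0' y by (intro N2[OF q'A]) auto
  also have "\<dots> = rdef q (Suc t) x s c0 y * D" using Neq DN by simp
  also have "\<dots> = mmT q (Suc t) x s c"
  proof (cases "D = 0")
    case True
    have "mmT q (Suc t) x s (c0@[y]) \<le> D" unfolding D_def using y
      by (intro member_le_sum mmT_nonneg[OF pq]) auto
    then have "mmT q (Suc t) x s (c0@[y]) = 0" using True mmT_nonneg[OF pq] by (metis order_antisym)
    then show ?thesis using True cd by simp
  next
    case False
    then show ?thesis unfolding rdef_def D_def[symmetric] cd by simp
  qed
  finally show ?case .
qed


definition qt :: "policy \<Rightarrow> nat \<Rightarrow> nat list \<Rightarrow> nat list \<Rightarrow> nat list \<Rightarrow> real" where
  "qt q t ss xs ys = q t (take t xs) (take t ss) (take (t - 1) ys) (ys ! (t - 1))"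

definition ratio :: "policy \<Rightarrow> nat \<Rightarrow> nat list \<Rightarrow> real" where
  "ratio q t ys = P q (\<lambda>ss' xs' ys'. take t ys' = take t ys) / P q (\<lambda>ss' xs' ys'. take (t - 1) ys' = take (t - 1) ys)"

definition pX :: "nat \<Rightarrow> nat list \<Rightarrow> real" where
  "pX k xs = PX1 (xs ! 0) * (\<Prod>t\<in>{2..k}. Q (xs ! (t - 2)) (xs ! (t - 1)))"

lemma joint_nz:
  assumes pq: "pA q" and k: "1 \<le> k" "k \<le> T" and w: "(ss,xs,ys) \<in> Om k"
    and nz: "joint k Q PX1 PS1 q ss xs ys \<noteq> 0"
  shows "\<forall>t\<in>{1..k}. 0 < qt q t ss xs ys"
    and "\<forall>t\<in>{2..k}. int (ss ! (t - 1)) = int (ss ! (t - 2)) - int (xs ! (t - 2)) + int (ys ! (t - 2))"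
    and "PS1 (ss!0) \<noteq> 0" "pX k xs \<noteq> 0"
    and "joint k Q PX1 PS1 q ss xs ys = PS1 (ss!0) * pX k xs * (\<Prod>t\<in>{1..k}. qt q t ss xs ys)"
proof -
  define F1 where "F1 = (\<lambda>t. q t (take t xs) (take t ss) (take (t - 1) ys) (ys ! (t - 1)))"
  define F2 where "F2 = (\<lambda>t. (if int (ss ! (t - 1)) = int (ss ! (t - 2)) - int (xs ! (t - 2)) + int (ys ! (t - 2))
                     then 1 else 0) * Q (xs ! (t - 2)) (xs ! (t - 1)) :: real)"
  have "PS1 (ss!0) * PX1 (xs!0) * prod F1 {1..k} * prod F2 {2..k} \<noteq> 0"
    using nz unfolding joint_def F1_def F2_def .
  then have g: "PS1 (ss!0) \<noteq> 0" "PX1 (xs!0) \<noteq> 0" "prod F1 {1..k} \<noteq> 0" "prod F2 {2..k} \<noteq> 0"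
    by (simp_all del: prod_zero_iff)
  have f3: "\<forall>t\<in>{1..k}. F1 t \<noteq> 0" using g(3) prod_zero_iff[of "{1..k}" F1] by blast
  have f4: "\<forall>t\<in>{2..k}. F2 t \<noteq> 0" using g(4) prod_zero_iff[of "{2..k}" F2] by blast
  have f: "PS1 (ss!0) \<noteq> 0" "PX1 (xs!0) \<noteq> 0"
     "\<forall>t\<in>{1..k}. q t (take t xs) (take t ss) (take (t - 1) ys) (ys ! (t - 1)) \<noteq> 0"
     "\<forall>t\<in>{2..k}. (if int (ss ! (t - 1)) = int (ss ! (t - 2)) - int (xs ! (t - 2)) + int (ys ! (t - 2))
                     then 1 else 0) * Q (xs ! (t - 2)) (xs ! (t - 1)) \<noteq> (0::real)"
    using g(1,2) f3 f4 unfolding F1_def F2_def by auto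
  show "\<forall>t\<in>{1..k}. 0 < qt q t ss xs ys"
  proof
    fix t assume t: "t \<in> {1..k}"
    have "0 \<le> qt q t ss xs ys" unfolding qt_def using t k w
      by (intro pA_nonneg[OF pq]) (auto simp: Om_def seqs_take seqs_nth)
    moreover have "qt q t ss xs ys \<noteq> 0" using bspec[OF f(3) t] unfolding qt_def .
    ultimately show "0 < qt q t ss xs ys" by simp
  qed
  show ind: "\<forall>t\<in>{2..k}. int (ss ! (t - 1)) = int (ss ! (t - 2)) - int (xs ! (t - 2)) + int (ys ! (t - 2))"
  proof
    fix t assume t: "t \<in> {2..k}"
    show "int (ss ! (t - 1)) = int (ss ! (t - 2)) - int (xs ! (t - 2)) + int (ys ! (t - 2))"
      using bspec[OF f(4) t] by (cases "int (ss ! (t - 1)) = int (ss ! (t - 2)) - int (xs ! (t - 2)) + int (ys ! (t - 2))") simp_all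
  qed
  show "PS1 (ss!0) \<noteq> 0" by (rule f(1))
  have pQ: "(\<Prod>t\<in>{2..k}. (if int (ss ! (t - 1)) = int (ss ! (t - 2)) - int (xs ! (t - 2)) + int (ys ! (t - 2))
                     then 1 else 0) * Q (xs ! (t - 2)) (xs ! (t - 1))) = (\<Prod>t\<in>{2..k}. Q (xs ! (t - 2)) (xs ! (t - 1)))"
    using ind by (intro prod.cong refl) auto
  have "(\<Prod>t\<in>{2..k}. Q (xs ! (t - 2)) (xs ! (t - 1))) \<noteq> 0" using f(4) pQ by simp
  then show "pX k xs \<noteq> 0" using f(2) unfolding pX_def by simp
  show "joint k Q PX1 PS1 q ss xs ys = PS1 (ss!0) * pX k xs * (\<Prod>t\<in>{1..k}. qt q t ss xs ys)"
    unfolding joint_def pQ pX_def qt_def by (simp add: ac_simps)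
qed

lemma determ:
  assumes pq: "pA q" and w: "(ss,xs,ys) \<in> Om T" and w': "(ss',xs,ys) \<in> Om T"
    and nz: "joint T Q PX1 PS1 q ss xs ys \<noteq> 0" and nz': "joint T Q PX1 PS1 q ss' xs ys \<noteq> 0"
    and s0: "ss ! 0 = ss' ! 0"
  shows "ss = ss'"
proof -
  have i1: "\<forall>t\<in>{2..T}. int (ss ! (t - 1)) = int (ss ! (t - 2)) - int (xs ! (t - 2)) + int (ys ! (t - 2))"
    using joint_nz(2)[OF pq T1 order_refl w nz] .
  have i2: "\<forall>t\<in>{2..T}. int (ss' ! (t - 1)) = int (ss' ! (t - 2)) - int (xs ! (t - 2)) + int (ys ! (t - 2))"
    using joint_nz(2)[OF pq T1 order_refl w' nz'] .
  have l: "length ss = T" "length ss' = T" using w w' by (auto simp: Om_def seqs_len)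
  have "\<forall>i. i < T \<longrightarrow> ss ! i = ss' ! i"
  proof
    fix i show "i < T \<longrightarrow> ss ! i = ss' ! i"
    proof (induction i)
      case 0 then show ?case using s0 by simp
    next
      case (Suc i)
      show ?case
      proof
        assume iT: "Suc i < T"
        then have "ss ! i = ss' ! i" using Suc by simp
        moreover have "Suc (Suc i) \<in> {2..T}" using iT by simp
        ultimately have "int (ss ! Suc i) = int (ss' ! Suc i)"
          using bspec[OF i1, of "Suc (Suc i)"] bspec[OF i2, of "Suc (Suc i)"] by simp
        then show "ss ! Suc i = ss' ! Suc i" by simp
      qed
    qed
  qed
  then show ?thesis using l by (intro nth_equalityI) auto
qed

lemma A_eq:
  assumes pq: "pA q" and w: "(ss,xs,ys) \<in> Om T" and nz: "joint T Q PX1 PS1 q ss xs ys \<noteq> 0"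
  shows "P q (\<lambda>ss' xs' ys'. xs' = xs \<and> ss' ! 0 = ss ! 0 \<and> ys' = ys) = joint T Q PX1 PS1 q ss xs ys"
proof -
  have "P q (\<lambda>ss' xs' ys'. xs' = xs \<and> ss' ! 0 = ss ! 0 \<and> ys' = ys)
      = (\<Sum>w'\<in>Om T. if w' = (ss,xs,ys) then joint T Q PX1 PS1 q ss xs ys else 0)"
    unfolding prob_ev_SS SS_def
  proof (intro sum.cong refl)
    fix w' assume w': "w' \<in> Om T"
    obtain ss' xs' ys' where wd: "w' = (ss',xs',ys')" by (cases w') auto
    show "(case w' of (ss', xs', ys') \<Rightarrow> (if xs' = xs \<and> ss' ! 0 = ss ! 0 \<and> ys' = ys then 1 else 0) * joint T Q PX1 PS1 q ss' xs' ys')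
       = (if w' = (ss,xs,ys) then joint T Q PX1 PS1 q ss xs ys else 0)"
    proof (cases "xs' = xs \<and> ss' ! 0 = ss ! 0 \<and> ys' = ys")
      case True
      show ?thesis
      proof (cases "joint T Q PX1 PS1 q ss' xs ys = 0")
        case True2: True
        have "ss' \<noteq> ss" using True2 nz by auto
        then show ?thesis using True True2 wd by auto
      next
        case False
        have "ss = ss'" using True w' wd by (intro determ[OF pq w _ nz False]) auto
        then show ?thesis using True wd by auto
      qed
    qed (use wd in auto)
  qed
  also have "\<dots> = joint T Q PX1 PS1 q ss xs ys" using w by (simp add: sum.delta)
  finally show ?thesis .
qed

lemma B_gen:
  assumes pq: "pA q" shows "1 \<le> k \<Longrightarrow> k \<le> T \<Longrightarrow> xs \<in> seqs k mx \<Longrightarrow> s1 \<le> ms \<Longrightarrow>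
    SS q k (\<lambda>ss' xs' ys'. if xs' = xs \<and> ss' ! 0 = s1 then 1 else 0) = PS1 s1 * pX k xs"
proof (induction k arbitrary: xs rule: nat_induct_at_least)
  case base
  have lx1: "length xs = 1" using base.prems(2) by (simp add: seqs_len)
  then obtain x0 where xd: "xs = [x0]" by (cases xs) auto
  have x0: "x0 \<le> mx" using seqs_nth[OF base.prems(2), of 0] xd by simp
  define Z where "Z = PS1 s1 * PX1 x0"
  have "SS q 1 (\<lambda>ss' xs' ys'. if xs' = xs \<and> ss' ! 0 = s1 then 1 else 0)
     = (\<Sum>s\<in>{0..ms}. \<Sum>x\<in>{0..mx}. \<Sum>y\<in>{0..my}. (if x = x0 \<and> s = s1 then 1 else 0) * (PS1 s * PX1 x * q (Suc 0) [x] [s] [] y))"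
    unfolding SS_def One_nat_def sum_Om_Suc Om_0 xd by (simp add: sum_E joint_one)
  also have "\<dots> = (\<Sum>s\<in>{0..ms}. \<Sum>x\<in>{0..mx}. if x = x0 then (if s = s1 then Z * (\<Sum>y\<in>{0..my}. q (Suc 0) [x0] [s1] [] y) else 0) else 0)"
    by (intro sum.cong refl) (auto simp: Z_def sum_distrib_left)
  also have "(\<Sum>y\<in>{0..my}. q (Suc 0) [x0] [s1] [] y) = 1"
    using x0 base.prems T1 by (intro pA_sum[OF pq, unfolded One_nat_def]) (auto simp: seqs_def)
  finally show ?case using x0 base.prems by (simp add: sum.delta Z_def xd pX_def)
next
  case (Suc k)
  obtain xs0 x0 where xd: "xs = xs0 @ [x0]" and xs0: "xs0 \<in> seqs k mx" and x0: "x0 \<le> mx"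
    using Suc.prems(2) unfolding seqs_Suc by auto
  have lx: "length xs0 = k" using xs0 by (simp add: seqs_len)
  have "SS q (Suc k) (\<lambda>ss' xs' ys'. if xs' = xs \<and> ss' ! 0 = s1 then 1 else 0)
     = SS q k (\<lambda>ss' xs' ys'. (if xs' = xs0 \<and> ss' ! 0 = s1 then 1 else 0) * (\<Sum>x\<in>{0..mx}. Q (last xs') x * (if x = x0 then 1 else 0)))"
    using Suc.hyps Suc.prems by (intro SS_Suc_gen[OF pq]) (auto simp: xd Om_def seqs_len nth_append)
  also have "\<dots> = SS q k (\<lambda>ss' xs' ys'. Q (last xs0) x0 * (if xs' = xs0 \<and> ss' ! 0 = s1 then 1 else 0))"
    using x0 by (intro SS_cong) (auto simp: if_distrib sum.delta cong: if_cong)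
  also have "\<dots> = Q (last xs0) x0 * (PS1 s1 * pX k xs0)"
    unfolding SS_cmult using Suc xs0 by simp
  also have "\<dots> = PS1 s1 * pX (Suc k) xs"
  proof -
    have xne: "xs0 \<noteq> []" using lx Suc.hyps by auto
    have c: "\<not> Suc k < 2" using Suc.hyps by simp
    have "(\<Prod>t\<in>{2..Suc k}. Q ((xs0@[x0]) ! (t - 2)) ((xs0@[x0]) ! (t - 1)))
        = (\<Prod>t\<in>{2..k}. Q (xs0 ! (t - 2)) (xs0 ! (t - 1))) * Q (last xs0) x0"
      unfolding prod.cl_ivl_Suc if_not_P[OF c]
    proof (rule arg_cong2[where f="(*)"])
      show "(\<Prod>t\<in>{2..k}. Q ((xs0@[x0]) ! (t - 2)) ((xs0@[x0]) ! (t - 1))) = (\<Prod>t\<in>{2..k}. Q (xs0 ! (t - 2)) (xs0 ! (t - 1)))"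
        using lx by (intro prod.cong refl) (auto simp: nth_append)
      have e: "(xs0@[x0]) ! (Suc k - 2) = last xs0" "(xs0@[x0]) ! (Suc k - 1) = x0"
        using lx xne Suc.hyps by (auto simp: nth_append last_conv_nth)
      show "Q ((xs0@[x0]) ! (Suc k - 2)) ((xs0@[x0]) ! (Suc k - 1)) = Q (last xs0) x0" unfolding e ..
    qed
    moreover have "(xs0@[x0]) ! 0 = xs0 ! 0" using xne by (simp add: nth_append)
    ultimately have "pX (Suc k) xs = pX k xs0 * Q (last xs0) x0"
      unfolding pX_def xd by simp
    then show ?thesis by simp
  qed
  finally show ?case .
qed


lemma sum3: "(\<Sum>v\<in>A \<times> B \<times> C. f v) = (\<Sum>a\<in>A. \<Sum>b\<in>B. \<Sum>c\<in>C. f (a,b,c))"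
  by (simp add: sum.cartesian_product)

lemma plogp_eq: "plogp p r = p * ln (p / r)" by (simp add: plogp_def)

lemma SS_cong_nz:
  assumes "\<And>ss xs ys. (ss,xs,ys) \<in> Om k \<Longrightarrow> joint k Q PX1 PS1 q ss xs ys \<noteq> 0 \<Longrightarrow> f ss xs ys = g ss xs ys"
  shows "SS q k f = SS q k g"
  unfolding SS_def
proof (intro sum.cong refl)
  fix w assume w: "w \<in> Om k"
  obtain ss xs ys where wd: "w = (ss,xs,ys)" by (cases w) auto
  show "(case w of (ss,xs,ys) \<Rightarrow> f ss xs ys * joint k Q PX1 PS1 q ss xs ys) = (case w of (ss,xs,ys) \<Rightarrow> g ss xs ys * joint k Q PX1 PS1 q ss xs ys)"
    using assms[of ss xs ys] w wd by (cases "joint k Q PX1 PS1 q ss xs ys = 0") auto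
qed

lemma SS_sum: "SS q k (\<lambda>ss xs ys. \<Sum>i\<in>I. h i ss xs ys) = (\<Sum>i\<in>I. SS q k (h i))"
  unfolding SS_def sum_distrib_right by (subst sum.swap) (simp add: case_prod_unfold)

lemma SS_diff: "SS q k (\<lambda>ss xs ys. f ss xs ys - g ss xs ys) = SS q k f - SS q k g"
  unfolding SS_def by (simp add: case_prod_unfold left_diff_distrib sum_subtractf)

lemma SS_mono_nz:
  assumes pq: "pA q" and k: "1 \<le> k" "k \<le> T"
    and le: "\<And>ss xs ys. (ss,xs,ys) \<in> Om k \<Longrightarrow> joint k Q PX1 PS1 q ss xs ys \<noteq> 0 \<Longrightarrow> f ss xs ys \<le> g ss xs ys"
  shows "SS q k f \<le> SS q k g"
  unfolding SS_def
proof (intro sum_mono)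
  fix w assume w: "w \<in> Om k"
  obtain ss xs ys where wd: "w = (ss,xs,ys)" by (cases w) auto
  have jn: "0 \<le> joint k Q PX1 PS1 q ss xs ys" using joint_nonneg[OF pq k] w wd by simp
  show "(case w of (ss,xs,ys) \<Rightarrow> f ss xs ys * joint k Q PX1 PS1 q ss xs ys) \<le> (case w of (ss,xs,ys) \<Rightarrow> g ss xs ys * joint k Q PX1 PS1 q ss xs ys)"
    using le[of ss xs ys] w wd jn by (cases "joint k Q PX1 PS1 q ss xs ys = 0") (auto intro: mult_right_mono)
qed

lemma telescope:
  fixes f :: "nat \<Rightarrow> real"
  shows "(\<And>t. t \<le> n \<Longrightarrow> f t \<noteq> 0) \<Longrightarrow> (\<Prod>t\<in>{1..n}. f t / f (t - 1)) = f n / f 0"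
proof (induction n)
  case 0 then show ?case by simp
next
  case (Suc n)
  have "(\<Prod>t\<in>{1..Suc n}. f t / f (t - 1)) = (\<Prod>t\<in>{1..n}. f t / f (t - 1)) * (f (Suc n) / f n)"
    by (simp add: prod.cl_ivl_Suc)
  also have "\<dots> = f n / f 0 * (f (Suc n) / f n)" using Suc by simp
  also have "\<dots> = f (Suc n) / f 0" using Suc.prems[of n] by simp
  finally show ?case .
qed

lemma C_eq:
  assumes pq: "pA q" and w: "(ss,xs,ys) \<in> Om T" and nz: "joint T Q PX1 PS1 q ss xs ys \<noteq> 0"
  shows "P q (\<lambda>ss' xs' ys'. ys' = ys) = (\<Prod>t\<in>{1..T}. ratio q t ys)"
    and "\<forall>t\<in>{1..T}. 0 < ratio q t ys"
proof -
  define PY where "PY = (\<lambda>t. P q (\<lambda>ss' xs' ys'. take t ys' = take t ys))"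
  have jp: "0 < joint T Q PX1 PS1 q ss xs ys" using joint_nonneg[OF pq T1 order_refl w] nz by simp
  have pos: "0 < PY t" for t
  proof -
    have "joint T Q PX1 PS1 q ss xs ys \<le> PY t" unfolding PY_def by (rule P_ge[OF pq w]) simp
    then show ?thesis using jp by simp
  qed
  have PY0: "PY 0 = 1"
  proof -
    have "PY 0 = SS q T (\<lambda>_ _ _. 1)" unfolding PY_def prob_ev_SS by (intro SS_cong) simp
    then show ?thesis using SS_mass[OF pq T1 order_refl] by simp
  qed
  have PYT: "PY T = P q (\<lambda>ss' xs' ys'. ys' = ys)"
    unfolding PY_def prob_ev_SS using w by (intro SS_cong) (auto simp: Om_def seqs_len)
  have rat: "ratio q t ys = PY t / PY (t - 1)" for t unfolding ratio_def PY_def ..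
  show "P q (\<lambda>ss' xs' ys'. ys' = ys) = (\<Prod>t\<in>{1..T}. ratio q t ys)"
    unfolding rat using telescope[of T PY] pos PY0 PYT by (simp add: less_le)
  show "\<forall>t\<in>{1..T}. 0 < ratio q t ys" unfolding rat using pos by simp
qed

lemma log_pt:
  assumes pq: "pA q" and w: "(ss,xs,ys) \<in> Om T" and nz: "joint T Q PX1 PS1 q ss xs ys \<noteq> 0"
  shows "ln (P q (\<lambda>ss' xs' ys'. xs' = xs \<and> ss' ! 0 = ss ! 0 \<and> ys' = ys) /
             (P q (\<lambda>ss' xs' ys'. xs' = xs \<and> ss' ! 0 = ss ! 0) * P q (\<lambda>ss' xs' ys'. ys' = ys)))
       = (\<Sum>t\<in>{1..T}. ln (qt q t ss xs ys / ratio q t ys))"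
proof -
  note jn = joint_nz[OF pq T1 order_refl w nz]
  have A: "P q (\<lambda>ss' xs' ys'. xs' = xs \<and> ss' ! 0 = ss ! 0 \<and> ys' = ys) = PS1 (ss!0) * pX T xs * (\<Prod>t\<in>{1..T}. qt q t ss xs ys)"
    using A_eq[OF pq w nz] jn(5) by simp
  have s0: "ss ! 0 \<le> ms" using w T1 by (auto simp: Om_def intro: seqs_nth)
  have B: "P q (\<lambda>ss' xs' ys'. xs' = xs \<and> ss' ! 0 = ss ! 0) = PS1 (ss!0) * pX T xs"
    unfolding prob_ev_SS using B_gen[OF pq T1 order_refl _ s0] w by (simp add: Om_def)
  note C = C_eq[OF pq w nz]
  have rnz: "\<And>t. t \<in> {1..T} \<Longrightarrow> ratio q t ys \<noteq> 0" using C(2) by force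
  have qnz: "\<And>t. t \<in> {1..T} \<Longrightarrow> qt q t ss xs ys \<noteq> 0" using jn(1) by force
  have pr: "(\<Prod>t\<in>{1..T}. ratio q t ys) \<noteq> 0" using rnz by simp
  have "P q (\<lambda>ss' xs' ys'. xs' = xs \<and> ss' ! 0 = ss ! 0 \<and> ys' = ys) /
             (P q (\<lambda>ss' xs' ys'. xs' = xs \<and> ss' ! 0 = ss ! 0) * P q (\<lambda>ss' xs' ys'. ys' = ys))
      = (\<Prod>t\<in>{1..T}. qt q t ss xs ys) / (\<Prod>t\<in>{1..T}. ratio q t ys)"
    unfolding A B C(1) using jn(3,4) pr by (simp add: field_simps)
  also have "\<dots> = (\<Prod>t\<in>{1..T}. qt q t ss xs ys / ratio q t ys)" by (simp add: prod_dividef)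
  finally have eq: "P q (\<lambda>ss' xs' ys'. xs' = xs \<and> ss' ! 0 = ss ! 0 \<and> ys' = ys) /
             (P q (\<lambda>ss' xs' ys'. xs' = xs \<and> ss' ! 0 = ss ! 0) * P q (\<lambda>ss' xs' ys'. ys' = ys))
      = (\<Prod>t\<in>{1..T}. qt q t ss xs ys / ratio q t ys)" .
  show ?thesis unfolding eq by (rule ln_prod) (use qnz rnz in auto)
qed

lemma CR:
  assumes pq: "pA q"
  shows "real T * leakage mx my ms T Q PX1 PS1 q = (\<Sum>t\<in>{1..T}. SS q T (\<lambda>ss xs ys. ln (qt q t ss xs ys / ratio q t ys)))"
proof -
  define A where "A = (\<lambda>(xs,s1,ys). P q (\<lambda>ss' xs' ys'. xs' = xs \<and> ss' ! 0 = s1 \<and> ys' = ys))"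
  define g where "g = (\<lambda>(xs,s1,ys). ln (P q (\<lambda>ss' xs' ys'. xs' = xs \<and> ss' ! 0 = s1 \<and> ys' = ys) /
             (P q (\<lambda>ss' xs' ys'. xs' = xs \<and> ss' ! 0 = s1) * P q (\<lambda>ss' xs' ys'. ys' = ys))))"
  have "real T * leakage mx my ms T Q PX1 PS1 q = (\<Sum>xs\<in>seqs T mx. \<Sum>s1\<in>{0..ms}. \<Sum>ys\<in>seqs T my. A (xs,s1,ys) * g (xs,s1,ys))"
    unfolding leakage_def Let_def plogp_eq A_def g_def using T1 by simp
  also have "\<dots> = (\<Sum>v\<in>seqs T mx \<times> {0..ms} \<times> seqs T my. SS q T (\<lambda>ss xs ys. 1 * (if (xs, ss!0, ys) = v then 1 else 0)) * g v)"
    unfolding sum3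
  proof (intro sum.cong refl arg_cong2[where f="(*)"])
    fix xs s1 ys
    show "A (xs,s1,ys) = SS q T (\<lambda>ss xs' ys'. 1 * (if (xs', ss!0, ys') = (xs,s1,ys) then 1 else 0))"
      unfolding A_def prob_ev_SS prod.case by (intro SS_cong) auto
  qed
  also have "\<dots> = SS q T (\<lambda>ss xs ys. 1 * g (xs, ss!0, ys))"
    using T1 by (intro SS_group[symmetric]) (auto simp: Om_def intro: seqs_nth)
  also have "\<dots> = SS q T (\<lambda>ss xs ys. \<Sum>t\<in>{1..T}. ln (qt q t ss xs ys / ratio q t ys))"
    by (intro SS_cong_nz) (simp add: g_def log_pt[OF pq])
  also have "\<dots> = (\<Sum>t\<in>{1..T}. SS q T (\<lambda>ss xs ys. ln (qt q t ss xs ys / ratio q t ys)))"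
    by (rule SS_sum)
  finally show ?thesis .
qed


definition Gf :: "policyB \<Rightarrow> ((nat list \<Rightarrow> nat list \<Rightarrow> nat list \<Rightarrow> bool) \<Rightarrow> real) \<Rightarrow> nat \<Rightarrow> nat \<times> nat \<times> nat list \<Rightarrow> real" where
  "Gf r p t v = (case v of (x,s,yt) \<Rightarrow> ln (r t x s (butlast yt) (last yt) /
      (p (\<lambda>ss' xs' ys'. take t ys' = yt) / p (\<lambda>ss' xs' ys'. take (t - 1) ys' = butlast yt))))"

lemma grp:
  assumes t: "t \<in> {1..T}"
  shows "SS q0 T (\<lambda>ss xs ys. Gf r p t (xs!(t-1), ss!(t-1), take t ys)) =
    (\<Sum>x\<in>{0..mx}. \<Sum>s\<in>{0..ms}. \<Sum>yt\<in>seqs t my.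
       P q0 (\<lambda>ss' xs' ys'. xs' ! (t - 1) = x \<and> ss' ! (t - 1) = s \<and> take t ys' = yt) * Gf r p t (x,s,yt))"
proof -
  have "SS q0 T (\<lambda>ss xs ys. Gf r p t (xs!(t-1), ss!(t-1), take t ys)) = SS q0 T (\<lambda>ss xs ys. 1 * Gf r p t (xs!(t-1), ss!(t-1), take t ys))"
    by simp
  also have "\<dots> = (\<Sum>v\<in>{0..mx} \<times> {0..ms} \<times> seqs t my. SS q0 T (\<lambda>ss xs ys. 1 * (if (xs!(t-1), ss!(t-1), take t ys) = v then 1 else 0)) * Gf r p t v)"
    using t by (intro SS_group) (auto simp: Om_def intro: seqs_nth seqs_take)
  also have "\<dots> = (\<Sum>x\<in>{0..mx}. \<Sum>s\<in>{0..ms}. \<Sum>yt\<in>seqs t my.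
       P q0 (\<lambda>ss' xs' ys'. xs' ! (t - 1) = x \<and> ss' ! (t - 1) = s \<and> take t ys' = yt) * Gf r p t (x,s,yt))"
    unfolding sum3 prob_ev_SS by (intro sum.cong refl arg_cong2[where f="(*)"] SS_cong) auto
  finally show ?thesis .
qed

lemma take_facts:
  assumes t: "t \<in> {1..T}" and l: "length l = T"
  shows "last (take t l) = l ! (t - 1)" "butlast (take t l) = take (t - 1) l"
    and "take (t - 1) l @ [l ! (t - 1)] = take t l"
proof -
  show "last (take t l) = l ! (t - 1)" using t l by (intro last_take_nth) auto
  show "butlast (take t l) = take (t - 1) l" using t l by (simp add: butlast_take)
  have "take (Suc (t - 1)) l = take (t - 1) l @ [l ! (t - 1)]" using t l by (intro take_Suc_conv_app_nth) auto
  then show "take (t - 1) l @ [l ! (t - 1)] = take t l" using t by simp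
qed

lemma qtB:
  assumes t: "t \<in> {1..T}" and w: "(ss,xs,ys) \<in> Om T"
  shows "ln (qt (embedB r) t ss xs ys / ratio (embedB r) t ys) = Gf r (P (embedB r)) t (xs!(t-1), ss!(t-1), take t ys)"
proof -
  have l: "length ss = T" "length xs = T" "length ys = T" using w by (auto simp: Om_def seqs_len)
  show ?thesis unfolding qt_def embedB_def ratio_def Gf_def
    using take_facts[OF t l(1)] take_facts[OF t l(2)] take_facts[OF t l(3)] by simp
qed

lemma part2:
  assumes pq: "pA (embedB r)" and t: "t \<in> {1..T}"
  shows "SS (embedB r) T (\<lambda>ss xs ys. ln (qt (embedB r) t ss xs ys / ratio (embedB r) t ys)) = cond_mi mx my ms T Q PX1 PS1 r t"
proof -
  have "SS (embedB r) T (\<lambda>ss xs ys. ln (qt (embedB r) t ss xs ys / ratio (embedB r) t ys))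
      = SS (embedB r) T (\<lambda>ss xs ys. Gf r (P (embedB r)) t (xs!(t-1), ss!(t-1), take t ys))"
    by (intro SS_cong) (rule qtB[OF t])
  also have "\<dots> = cond_mi mx my ms T Q PX1 PS1 r t"
    unfolding grp[OF t] cond_mi_def Let_def
    by (intro sum.cong refl) (simp add: Gf_def)
  finally show ?thesis .
qed

lemma PY_sum:
  assumes pq: "pA q0" and k: "1 \<le> k" "k \<le> T"
  shows "P q0 (\<lambda>ss' xs' ys'. take k ys' = c) = (\<Sum>x\<in>{0..mx}. \<Sum>s\<in>{0..ms}. mmT q0 k x s c)"
proof -
  have "P q0 (\<lambda>ss' xs' ys'. take k ys' = c) = SS q0 T (\<lambda>ss xs ys. (if take k ys = c then 1 else 0) * (\<lambda>v. 1) (xs!(k-1), ss!(k-1)))"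
    unfolding prob_ev_SS by simp
  also have "\<dots> = (\<Sum>v\<in>{0..mx} \<times> {0..ms}. SS q0 T (\<lambda>ss xs ys. (if take k ys = c then 1 else 0) * (if (xs!(k-1), ss!(k-1)) = v then 1 else 0)) * 1)"
    using k by (intro SS_group) (auto simp: Om_def intro: seqs_nth)
  also have "\<dots> = (\<Sum>x\<in>{0..mx}. \<Sum>s\<in>{0..ms}. mmT q0 k x s c)"
    unfolding sum.cartesian_product mmT_def prob_ev_SS
    by (intro sum.cong refl) (auto split: prod.splits intro!: SS_cong)
  finally show ?thesis .
qed

lemma PY_eq:
  assumes pq: "pA q" and k: "k \<le> T" and c: "c \<in> seqs k my"
  shows "P (embedB (rdef q)) (\<lambda>ss' xs' ys'. take k ys' = c) = P q (\<lambda>ss' xs' ys'. take k ys' = c)"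
proof (cases "k = 0")
  case True
  then have c0: "c = []" using c by simp
  have q'A: "pA (embedB (rdef q))" by (rule rdef_policy[OF pq])
  have "P q0 (\<lambda>ss' xs' ys'. take k ys' = c) = 1" if "pA q0" for q0
  proof -
    have "P q0 (\<lambda>ss' xs' ys'. take k ys' = c) = SS q0 T (\<lambda>_ _ _. 1)"
      unfolding prob_ev_SS True c0 by (intro SS_cong) simp
    then show ?thesis using SS_mass[OF that T1 order_refl] by simp
  qed
  then show ?thesis using pq q'A by simp
next
  case False
  then have k1: "1 \<le> k" by simp
  show ?thesis unfolding PY_sum[OF rdef_policy[OF pq] k1 k] PY_sum[OF pq k1 k]
    using marg_eq[OF pq k1 k _ _ c] by (intro sum.cong refl) auto
qed


lemma pA_mix:
  assumes p1: "pA q1" and p2: "pA q2"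
  shows "pA (\<lambda>\<tau>. if \<tau> = t then q2 \<tau> else q1 \<tau>)"
  unfolding policyA_def[of mx my ms T "\<lambda>\<tau>. if \<tau> = t then q2 \<tau> else q1 \<tau>"]
proof (intro ballI)
  fix \<tau> xs ss ys assume h: "\<tau> \<in> {1..T}" "xs \<in> seqs \<tau> mx" "ss \<in> seqs \<tau> ms" "ys \<in> seqs (\<tau> - 1) my"
  show "(\<forall>y\<in>{0..my}. 0 \<le> (if \<tau> = t then q2 \<tau> else q1 \<tau>) xs ss ys y) \<and>
       (\<Sum>y\<in>{0..my}. (if \<tau> = t then q2 \<tau> else q1 \<tau>) xs ss ys y) = 1 \<and>
       (\<Sum>y\<in>{y\<in>{0..my}. int (last ss) - int (last xs) + int y \<in> {0..int ms}}.
           (if \<tau> = t then q2 \<tau> else q1 \<tau>) xs ss ys y) = 1"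
  proof (cases "\<tau> = t")
    case True
    show ?thesis unfolding if_P[OF True] using pA_at[OF p2 h] .
  next
    case False
    show ?thesis unfolding if_not_P[OF False] using pA_at[OF p1 h] .
  qed
qed

definition jrest :: "policy \<Rightarrow> nat \<Rightarrow> nat list \<Rightarrow> nat list \<Rightarrow> nat list \<Rightarrow> real" where
  "jrest q0 t ss xs ys = PS1 (ss ! 0) * PX1 (xs ! 0) *
     (\<Prod>\<tau>\<in>{1..t} - {t}. q0 \<tau> (take \<tau> xs) (take \<tau> ss) (take (\<tau> - 1) ys) (ys ! (\<tau> - 1))) *
     (\<Prod>\<tau>\<in>{2..t}. (if int (ss ! (\<tau> - 1)) = int (ss ! (\<tau> - 2)) - int (xs ! (\<tau> - 2)) + int (ys ! (\<tau> - 2))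
                     then 1 else 0) * Q (xs ! (\<tau> - 2)) (xs ! (\<tau> - 1)))"

lemma joint_split:
  assumes "1 \<le> t"
  shows "joint t Q PX1 PS1 q0 ss xs ys = jrest q0 t ss xs ys * q0 t (take t xs) (take t ss) (take (t - 1) ys) (ys ! (t - 1))"
proof -
  have "t \<in> {1..t}" using assms by simp
  then have "(\<Prod>\<tau>\<in>{1..t}. q0 \<tau> (take \<tau> xs) (take \<tau> ss) (take (\<tau> - 1) ys) (ys ! (\<tau> - 1)))
     = q0 t (take t xs) (take t ss) (take (t - 1) ys) (ys ! (t - 1)) *
       (\<Prod>\<tau>\<in>{1..t} - {t}. q0 \<tau> (take \<tau> xs) (take \<tau> ss) (take (\<tau> - 1) ys) (ys ! (\<tau> - 1)))"
    by (rule prod.remove[OF finite_atLeastAtMost])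
  then show ?thesis unfolding joint_def jrest_def by (simp add: ac_simps)
qed

lemma jrest_mix: "jrest (\<lambda>\<tau>. if \<tau> = t then q2 \<tau> else q1 \<tau>) t ss xs ys = jrest q1 t ss xs ys"
  unfolding jrest_def by (intro arg_cong2[where f="(*)"] refl prod.cong) auto

lemma h_bound:
  assumes pq: "pA q" and t: "t \<in> {1..T}"
  shows "SS q T (\<lambda>ss xs ys. if qt q t ss xs ys = 0 then 0 else
      rdef q t (xs!(t-1)) (ss!(t-1)) (take (t-1) ys) (ys!(t-1)) / qt q t ss xs ys) \<le> 1"
proof -
  define H where "H = (\<lambda>(a::nat list) (b::nat list) (c::nat list). if q t b a (butlast c) (last c) = 0 then 0 else
     rdef q t (last b) (last a) (butlast c) (last c) / q t b a (butlast c) (last c))"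
  define hyb where "hyb = (\<lambda>\<tau>. if \<tau> = t then embedB (rdef q) \<tau> else q \<tau>)"
  have hA: "pA hyb" unfolding hyb_def by (rule pA_mix[OF pq rdef_policy[OF pq]])
  have t1: "1 \<le> t" "t \<le> T" using t by auto
  have "SS q T (\<lambda>ss xs ys. if qt q t ss xs ys = 0 then 0 else
      rdef q t (xs!(t-1)) (ss!(t-1)) (take (t-1) ys) (ys!(t-1)) / qt q t ss xs ys)
     = SS q T (\<lambda>ss xs ys. H (take t ss) (take t xs) (take t ys))"
  proof (intro SS_cong)
    fix ss xs ys assume w: "(ss,xs,ys) \<in> Om T"
    have l: "length ss = T" "length xs = T" "length ys = T" using w by (auto simp: Om_def seqs_len)
    show "(if qt q t ss xs ys = 0 then 0 else
      rdef q t (xs!(t-1)) (ss!(t-1)) (take (t-1) ys) (ys!(t-1)) / qt q t ss xs ys) = H (take t ss) (take t xs) (take t ys)"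
      unfolding H_def qt_def using take_facts[OF t l(1)] take_facts[OF t l(2)] take_facts[OF t l(3)] by simp
  qed
  also have "\<dots> = SS q t H" using t1 by (intro SS_marg[OF pq]) auto
  also have "\<dots> \<le> SS hyb t (\<lambda>_ _ _. 1)"
    unfolding SS_def
  proof (intro sum_mono)
    fix w assume w: "w \<in> Om t"
    obtain ss xs ys where wd: "w = (ss,xs,ys)" by (cases w) auto
    have l: "length ss = t" "length xs = t" "length ys = t" using w wd by (auto simp: Om_def seqs_len)
    have tk0: "take t xs = xs" "take t ss = ss" "take (t - 1) ys = butlast ys"
      using l t1 by (auto simp: butlast_conv_take)
    have tk1: "ys ! (t - 1) = last ys" using l t1 by (subst last_conv_nth) auto
    note tk = tk0 tk1
    define R where "R = jrest q t ss xs ys"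
    define qv where "qv = q t xs ss (butlast ys) (last ys)"
    define rv where "rv = rdef q t (last xs) (last ss) (butlast ys) (last ys)"
    have Jq: "joint t Q PX1 PS1 q ss xs ys = R * qv" unfolding R_def qv_def joint_split[OF t1(1)] tk ..
    have Jh: "joint t Q PX1 PS1 hyb ss xs ys = R * rv"
      unfolding R_def rv_def joint_split[OF t1(1)] tk hyb_def jrest_mix by (simp add: embedB_def)
    have Hw: "H ss xs ys = (if qv = 0 then 0 else rv / qv)" unfolding H_def qv_def rv_def ..
    have jn: "0 \<le> joint t Q PX1 PS1 hyb ss xs ys" using joint_nonneg[OF hA t1] w wd by simp
    show "(case w of (ss,xs,ys) \<Rightarrow> H ss xs ys * joint t Q PX1 PS1 q ss xs ys)
       \<le> (case w of (ss,xs,ys) \<Rightarrow> 1 * joint t Q PX1 PS1 hyb ss xs ys)"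
      unfolding wd prod.case Hw Jq using jn Jh by auto
  qed
  also have "\<dots> = 1" by (rule SS_mass[OF hA t1])
  finally show ?thesis .
qed

lemma part1_term:
  assumes pq: "pA q" and t: "t \<in> {1..T}"
  shows "SS (embedB (rdef q)) T (\<lambda>ss xs ys. ln (qt (embedB (rdef q)) t ss xs ys / ratio (embedB (rdef q)) t ys))
       \<le> SS q T (\<lambda>ss xs ys. ln (qt q t ss xs ys / ratio q t ys))"
proof -
  define q' where "q' = embedB (rdef q)"
  have q'A: "pA q'" unfolding q'_def by (rule rdef_policy[OF pq])
  have t1: "1 \<le> t" "t \<le> T" using t by auto
  define h where "h = (\<lambda>ss xs ys. if qt q t ss xs ys = 0 then 0 else
      rdef q t (xs!(t-1)) (ss!(t-1)) (take (t-1) ys) (ys!(t-1)) / qt q t ss xs ys)"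
  have "SS q' T (\<lambda>ss xs ys. ln (qt q' t ss xs ys / ratio q' t ys))
      = SS q' T (\<lambda>ss xs ys. Gf (rdef q) (P q') t (xs!(t-1), ss!(t-1), take t ys))"
    unfolding q'_def by (intro SS_cong) (rule qtB[OF t])
  also have "\<dots> = (\<Sum>x\<in>{0..mx}. \<Sum>s\<in>{0..ms}. \<Sum>yt\<in>seqs t my.
       P q' (\<lambda>ss' xs' ys'. xs' ! (t - 1) = x \<and> ss' ! (t - 1) = s \<and> take t ys' = yt) * Gf (rdef q) (P q') t (x,s,yt))"
    by (rule grp[OF t])
  also have "\<dots> = (\<Sum>x\<in>{0..mx}. \<Sum>s\<in>{0..ms}. \<Sum>yt\<in>seqs t my.
       P q (\<lambda>ss' xs' ys'. xs' ! (t - 1) = x \<and> ss' ! (t - 1) = s \<and> take t ys' = yt) * Gf (rdef q) (P q) t (x,s,yt))"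
  proof (intro sum.cong refl arg_cong2[where f="(*)"])
    fix x s yt assume x: "x \<in> {0..mx}" and s: "s \<in> {0..ms}" and yt: "yt \<in> seqs t my"
    show "P q' (\<lambda>ss' xs' ys'. xs' ! (t - 1) = x \<and> ss' ! (t - 1) = s \<and> take t ys' = yt) =
          P q (\<lambda>ss' xs' ys'. xs' ! (t - 1) = x \<and> ss' ! (t - 1) = s \<and> take t ys' = yt)"
      using marg_eq[OF pq t1 _ _ yt, of x s] x s unfolding mmT_def q'_def by simp
    have byt: "butlast yt \<in> seqs (t - 1) my" using yt by (auto simp: seqs_def dest: in_set_butlastD)
    show "Gf (rdef q) (P q') t (x,s,yt) = Gf (rdef q) (P q) t (x,s,yt)"
      unfolding Gf_def q'_def using PY_eq[OF pq t1(2) yt] PY_eq[OF pq _ byt] t1 by simp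
  qed
  also have "\<dots> = SS q T (\<lambda>ss xs ys. Gf (rdef q) (P q) t (xs!(t-1), ss!(t-1), take t ys))"
    by (rule grp[OF t, symmetric])
  also have "\<dots> \<le> SS q T (\<lambda>ss xs ys. ln (qt q t ss xs ys / ratio q t ys) - (1 - h ss xs ys))"
  proof (rule SS_mono_nz[OF pq T1 order_refl])
    fix ss xs ys assume w: "(ss,xs,ys) \<in> Om T" and nz: "joint T Q PX1 PS1 q ss xs ys \<noteq> 0"
    have l: "length ss = T" "length xs = T" "length ys = T" using w by (auto simp: Om_def seqs_len)
    have jp: "0 < joint T Q PX1 PS1 q ss xs ys" using joint_nonneg[OF pq T1 order_refl w] nz by simp
    define qv where "qv = qt q t ss xs ys"
    define ra where "ra = ratio q t ys"
    define x where "x = xs ! (t - 1)"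
    define s where "s = ss ! (t - 1)"
    define c where "c = take (t - 1) ys"
    define y where "y = ys ! (t - 1)"
    define rv where "rv = rdef q t x s c y"
    have qvp: "0 < qv" unfolding qv_def using joint_nz(1)[OF pq T1 order_refl w nz] t by auto
    have rap: "0 < ra" unfolding ra_def using C_eq(2)[OF pq w nz] t by auto
    have xb: "x \<le> mx" "s \<le> ms" "y \<le> my" unfolding x_def s_def y_def using w t1 by (auto simp: Om_def intro: seqs_nth)
    have cy: "c @ [y] = take t ys" unfolding c_def y_def using take_facts[OF t l(3)] by simp
    have mp: "0 < mmT q t x s (c @ [y])"
    proof -
      have "joint T Q PX1 PS1 q ss xs ys \<le> mmT q t x s (c @ [y])"
        unfolding mmT_def cy x_def s_def by (rule P_ge[OF pq w]) simp
      then show ?thesis using jp by simp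
    qed
    have "mmT q t x s (c @ [y]) \<le> (\<Sum>y'\<in>{0..my}. mmT q t x s (c @ [y']))"
      using xb by (intro member_le_sum mmT_nonneg[OF pq]) auto
    then have Dp: "0 < (\<Sum>y'\<in>{0..my}. mmT q t x s (c @ [y']))" using mp by simp
    have rvp: "0 < rv" unfolding rv_def rdef_def using Dp mp by simp
    have G: "Gf (rdef q) (P q) t (xs!(t-1), ss!(t-1), take t ys) = ln (rv / ra)"
      unfolding Gf_def rv_def ra_def ratio_def x_def s_def c_def y_def
      using take_facts[OF t l(3)] by simp
    have hw: "h ss xs ys = rv / qv" unfolding h_def rv_def qv_def x_def s_def c_def y_def using qvp by (simp add: qv_def)
    have "ln (rv / qv) \<le> rv / qv - 1" using rvp qvp by (intro ln_le_minus_one) simp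
    then have "ln (rv / ra) \<le> ln (qv / ra) - (1 - rv / qv)"
      using rvp qvp rap by (simp add: ln_div)
    then show "Gf (rdef q) (P q) t (xs!(t-1), ss!(t-1), take t ys) \<le> ln (qt q t ss xs ys / ratio q t ys) - (1 - h ss xs ys)"
      unfolding G hw qv_def ra_def .
  qed
  also have "\<dots> = SS q T (\<lambda>ss xs ys. ln (qt q t ss xs ys / ratio q t ys)) - (SS q T (\<lambda>_ _ _. 1) - SS q T h)"
    by (simp add: SS_diff)
  also have "\<dots> \<le> SS q T (\<lambda>ss xs ys. ln (qt q t ss xs ys / ratio q t ys))"
    using h_bound[OF pq t] SS_mass[OF pq T1 order_refl] unfolding h_def by simp
  finally show ?thesis unfolding q'_def .
qed

end


theorem proposition1:
  fixes mx my ms T :: nat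
    and Q :: "nat \<Rightarrow> nat \<Rightarrow> real" and PX1 PS1 :: "nat \<Rightarrow> real"
  assumes "mx \<le> my" and "T \<ge> 1"
    and "stochastic Q mx" and "irreducible_mc Q mx" and "aperiodic_mc Q mx"
    and "is_pmf_on PX1 mx" and "is_pmf_on PS1 ms"
  shows "(\<forall>q. policyA mx my ms T q \<longrightarrow>
            (\<exists>r. policyA mx my ms T (embedB r) \<and>
                 leakage mx my ms T Q PX1 PS1 (embedB r) \<le> leakage mx my ms T Q PX1 PS1 q))
       \<and> (\<forall>r. policyA mx my ms T (embedB r) \<longrightarrow>
            leakage mx my ms T Q PX1 PS1 (embedB r)
              = (\<Sum>t\<in>{1..T}. cond_mi mx my ms T Q PX1 PS1 r t) / real T)"
proof -
  interpret setting mx my ms T Q PX1 PS1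
    using assms by unfold_locales auto
  have Tp: "0 < real T" using assms(2) by simp
  have P1: "\<exists>r. policyA mx my ms T (embedB r) \<and>
                 leakage mx my ms T Q PX1 PS1 (embedB r) \<le> leakage mx my ms T Q PX1 PS1 q"
    if pq: "policyA mx my ms T q" for q
  proof (intro exI conjI)
    show "policyA mx my ms T (embedB (rdef q))" by (rule rdef_policy[OF pq])
    have "real T * leakage mx my ms T Q PX1 PS1 (embedB (rdef q)) \<le> real T * leakage mx my ms T Q PX1 PS1 q"
      unfolding CR[OF rdef_policy[OF pq]] CR[OF pq]
      by (intro sum_mono part1_term[OF pq])
    then show "leakage mx my ms T Q PX1 PS1 (embedB (rdef q)) \<le> leakage mx my ms T Q PX1 PS1 q"
      using Tp by simp
  qed
  have P2: "leakage mx my ms T Q PX1 PS1 (embedB r) = (\<Sum>t\<in>{1..T}. cond_mi mx my ms T Q PX1 PS1 r t) / real T"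
    if pr: "policyA mx my ms T (embedB r)" for r
  proof -
    have "real T * leakage mx my ms T Q PX1 PS1 (embedB r) = (\<Sum>t\<in>{1..T}. cond_mi mx my ms T Q PX1 PS1 r t)"
      unfolding CR[OF pr] by (intro sum.cong refl part2[OF pr])
    then show ?thesis using Tp by (simp add: field_simps)
  qed
  show ?thesis using P1 P2 by blast
qed

end
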